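(* Let $r$ be the maximal multiplicity of an eigenvalue in the spectrum $\Lambda$. Then for every unit vector $|\psi\rangle\in\mathbb{C}^{d_A}\otimes\mathbb{C}^{d_B}$, $\mathcal{E}_\Lambda(\psi)=0$ if and only if the Schmidt rank of $|\psi\rangle$ (the rank of $\mathrm{Tr}_B|\psi\rangle\langle\psi|$) is at most $r$. In particular, $\mathcal{E}_\Lambda$ vanishes exactly on product states if and only if $\Lambda$ consists of $d$ distinct values.
   Context: Let $d=d_A\le d_B$. A spectrum is a multiset $\Lambda=\{\lambda_1,\dots,\lambda_d\}$ of unimodular complex numbers. Let $\mathcal{W}_\Lambda$ be the set of unitary matrices on $\mathbb{C}^{d_A}$ whose eigenvalues, counted with multiplicity, are exactly $\Lambda$. Define $F^\Lambda_\psi=\max_{W\in\mathcal{W}_\Lambda}|\langle\psi|(W\otimes \mathbb{1}_B)|\psi\rangle|^2$ and $\mathcal{E}_\Lambda(\psi)=1-F^\Lambda_\psi$. *)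

theory Defs
  imports "Jordan_Normal_Form.Schur_Decomposition" "Jordan_Normal_Form.DL_Rank"
begin

text \<open>Bipartite vectors in C^dA (x) C^dB are complex vectors of dimension dA*dB,
  with the basis vector |i>|j> (i < dA, j < dB) at index i*dB + j.\<close>

definition unitary_mat :: "nat \<Rightarrow> complex mat \<Rightarrow> bool" where
  "unitary_mat d W \<longleftrightarrow> W \<in> carrier_mat d d \<and> W * mat_adjoint W = 1\<^sub>m d \<and> mat_adjoint W * W = 1\<^sub>m d"

text \<open>Unitaries on C^d whose eigenvalues counted with multiplicity are exactly Lam
  (i.e. whose characteristic polynomial is prod over Lam of (x - lambda)).\<close>
definition W_spec :: "nat \<Rightarrow> complex multiset \<Rightarrow> complex mat set" where
  "W_spec d Lam = {W. unitary_mat d W \<and>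
      char_poly W = prod_mset (image_mset (\<lambda>a. [:-a, 1:]) Lam)}"

definition tensor_id :: "nat \<Rightarrow> nat \<Rightarrow> complex mat \<Rightarrow> complex mat" where
  "tensor_id dA dB W = mat (dA * dB) (dA * dB)
     (\<lambda>(k, l). if k mod dB = l mod dB then W $$ (k div dB, l div dB) else 0)"

definition expval :: "complex vec \<Rightarrow> complex mat \<Rightarrow> complex" where
  "expval psi X = (X *\<^sub>v psi) \<bullet>c psi"

definition F_Lam :: "nat \<Rightarrow> nat \<Rightarrow> complex multiset \<Rightarrow> complex vec \<Rightarrow> real" where
  "F_Lam dA dB Lam psi = Sup {(cmod (expval psi (tensor_id dA dB W)))\<^sup>2 | W. W \<in> W_spec dA Lam}"

definition E_Lam :: "nat \<Rightarrow> nat \<Rightarrow> complex multiset \<Rightarrow> complex vec \<Rightarrow> real" where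
  "E_Lam dA dB Lam psi = 1 - F_Lam dA dB Lam psi"

definition partial_trace_B :: "nat \<Rightarrow> nat \<Rightarrow> complex vec \<Rightarrow> complex mat" where
  "partial_trace_B dA dB psi = mat dA dA
     (\<lambda>(i, i'). \<Sum>j<dB. psi $ (i * dB + j) * cnj (psi $ (i' * dB + j)))"

definition schmidt_rank :: "nat \<Rightarrow> nat \<Rightarrow> complex vec \<Rightarrow> nat" where
  "schmidt_rank dA dB psi = vec_space.rank dA (partial_trace_B dA dB psi)"

definition unit_state :: "nat \<Rightarrow> nat \<Rightarrow> complex vec \<Rightarrow> bool" where
  "unit_state dA dB psi \<longleftrightarrow> psi \<in> carrier_vec (dA * dB) \<and> psi \<bullet>c psi = 1"

definition max_mult :: "complex multiset \<Rightarrow> nat" where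
  "max_mult Lam = Max (count Lam ` set_mset Lam)"

end

theory Submission
  imports Defs
begin


lemma adj_def: "mat_adjoint (A :: complex mat) = mat (dim_col A) (dim_row A) (\<lambda>(i,j). cnj (A $$ (j,i)))"
  by (rule eq_matI, auto simp: mat_adjoint_def mat_of_rows_def)

lemma adj_index[simp]: "i < dim_col A \<Longrightarrow> j < dim_row A \<Longrightarrow> mat_adjoint (A :: complex mat) $$ (i,j) = cnj (A $$ (j,i))"
  and adj_dim[simp]: "dim_row (mat_adjoint A) = dim_col A" "dim_col (mat_adjoint A) = dim_row A"
  by (auto simp: adj_def)

lemma adj_carrier[simp]: "A \<in> carrier_mat n m \<Longrightarrow> mat_adjoint (A :: complex mat) \<in> carrier_mat m n"
  by auto

lemma adj_adj[simp]: "mat_adjoint (mat_adjoint (A :: complex mat)) = A"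
  by (rule eq_matI, auto)

lemma adj_mult: assumes "A \<in> carrier_mat n k" "B \<in> carrier_mat k m"
  shows "mat_adjoint (A * B :: complex mat) = mat_adjoint B * mat_adjoint A"
  by (rule eq_matI, insert assms, auto simp: scalar_prod_def cnj_sum intro!: sum.cong)

lemma adj_one[simp]: "mat_adjoint (1\<^sub>m n :: complex mat) = 1\<^sub>m n"
  by (rule eq_matI, auto)

lemma adj_zero[simp]: "mat_adjoint (0\<^sub>m n m :: complex mat) = 0\<^sub>m m n"
  by (rule eq_matI, auto)

lemma adj_four_block: assumes "A \<in> carrier_mat n1 m1" "B \<in> carrier_mat n1 m2" "C \<in> carrier_mat n2 m1" "D \<in> carrier_mat n2 m2"
  shows "mat_adjoint (four_block_mat A B C D :: complex mat) = four_block_mat (mat_adjoint A) (mat_adjoint C) (mat_adjoint B) (mat_adjoint D)"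
  by (rule eq_matI, insert assms, auto simp: four_block_mat_def)



lemma cscalar_self: "w \<bullet>c w = complex_of_real (\<Sum>i<dim_vec w. (cmod (w $ i))\<^sup>2)"
proof -
  have "w \<bullet>c w = (\<Sum>i<dim_vec w. w $ i * cnj (w $ i))"
    by (simp add: scalar_prod_def lessThan_atLeast0)
  also have "\<dots> = (\<Sum>i<dim_vec w. complex_of_real ((cmod (w $ i))\<^sup>2))"
    by (rule sum.cong, simp, subst complex_norm_square, simp)
  finally show ?thesis by simp
qed

lemma unitary_schur:
  fixes A :: "complex mat"
  assumes "A \<in> carrier_mat n n" "char_poly A = (\<Prod>e\<leftarrow>es. [:-e,1:])"
  shows "\<exists>P T. unitary_mat n P \<and> T \<in> carrier_mat n n \<and> upper_triangular T \<and> diag_mat T = es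
     \<and> A = P * T * mat_adjoint P"
  using assms
proof (induct es arbitrary: n A)
  case Nil
  with degree_monic_char_poly[of A n] have n: "n = 0" by auto
  show ?case
    by (rule exI[of _ "1\<^sub>m n"], rule exI[of _ A], insert Nil n,
        auto simp: unitary_mat_def diag_mat_def upper_triangular_def)
next
  case (Cons e es n A)
  let ?n1 = "n - 1"
  from Cons have A: "A \<in> carrier_mat n n" by auto
  let ?cp = "char_poly A"
  from Cons(3)
  have cp: "?cp = [: -e, 1 :] * (\<Prod>e \<leftarrow> es. [:- e, 1:])" by auto
  have mon: "monic (\<Prod>e\<leftarrow> es. [:- e, 1:])" by (rule monic_prod_list, auto)
  have deg: "degree ?cp = Suc (degree (\<Prod>e\<leftarrow> es. [:- e, 1:]))" unfolding cp
    by (subst degree_mult_eq, insert mon, auto)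
  with degree_monic_char_poly[OF A] have n: "n \<noteq> 0" by auto
  define v where "v = find_eigenvector A e"
  define b where "b = basis_completion v"
  define ws where "ws = gram_schmidt n b"
  have e: "eigenvalue A e"
    unfolding eigenvalue_root_char_poly[OF A] cp by simp
  from find_eigenvector[OF A e] have ev: "eigenvector A v e" unfolding v_def .
  from this[unfolded eigenvector_def]
  have v[simp]: "v \<in> carrier_vec n" and v0: "v \<noteq> 0\<^sub>v n" and eigen: "A *\<^sub>v v = e \<cdot>\<^sub>v v" using A by auto
  interpret cof_vec_space n "TYPE(complex)" .
  from basis_completion[OF v v0, folded b_def]
  have span_b: "span (set b) = carrier_vec n" and dist_b: "distinct b"
    and indep: "\<not> lin_dep (set b)" and b: "set b \<subseteq> carrier_vec n" and hdb: "hd b = v"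
    and len_b: "length b = n" by auto
  from hdb len_b n obtain vs where bv: "b = v # vs" by (cases b, auto)
  from gram_schmidt_result[OF b dist_b indep refl, folded ws_def]
  have ws: "set ws \<subseteq> carrier_vec n" "corthogonal ws" "length ws = n"
    by (auto simp: len_b)
  from gram_schmidt_hd[OF v, of vs, folded bv] have hdws: "hd ws = v" unfolding ws_def .
  have ws0: "ws ! 0 = v" using hdws ws(3) n by (cases ws, auto)
  define c where "c = (\<lambda>i. complex_of_real (1 / sqrt (Re (ws ! i \<bullet>c ws ! i))))"
  define W where "W = mat n n (\<lambda>(k,i). c i * (ws ! i $ k))"
  have W: "W \<in> carrier_mat n n" unfolding W_def by auto
  have wsi: "i < n \<Longrightarrow> ws ! i \<in> carrier_vec n" for i using ws by auto
  have cc: "cnj (c i) * c i * (ws ! i \<bullet>c ws ! i) = 1" if i: "i < n" for i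
  proof -
    have nz: "ws ! i \<bullet>c ws ! i \<noteq> 0" using corthogonalD[OF ws(2), of i i] ws(3) i by auto
    obtain r where r: "ws ! i \<bullet>c ws ! i = complex_of_real r" "r \<ge> 0"
      using cscalar_self[of "ws ! i"] by (metis sum_nonneg zero_le_power2)
    with nz have rp: "r > 0" by auto
    have "cnj (c i) * c i * (ws ! i \<bullet>c ws ! i) = complex_of_real ((1 / sqrt r) * (1 / sqrt r) * r)"
      unfolding c_def r by (simp only: complex_cnj_complex_of_real Re_complex_of_real of_real_mult)
    also have h: "(1 / sqrt r) * (1 / sqrt r) * r = 1"
    proof -
      have "sqrt r * sqrt r = r" using rp by simp
      thus ?thesis using rp by (simp add: field_simps)
    qed
    finally show ?thesis by simp
  qed
  have WW: "mat_adjoint W * W = 1\<^sub>m n"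
  proof (rule eq_matI)
    fix i j assume i: "i < dim_row (1\<^sub>m n :: complex mat)" and j: "j < dim_col (1\<^sub>m n :: complex mat)"
    hence i: "i < n" and j: "j < n" by auto
    have "(mat_adjoint W * W) $$ (i,j) = (\<Sum>k<n. cnj (c i * ws ! i $ k) * (c j * ws ! j $ k))"
      using i j W by (auto simp: scalar_prod_def W_def lessThan_atLeast0 intro!: sum.cong)
    also have "\<dots> = cnj (c i) * c j * (ws ! j \<bullet>c ws ! i)"
      using wsi[OF i] wsi[OF j]
      by (auto simp: scalar_prod_def lessThan_atLeast0 sum_distrib_left intro!: sum.cong)
    also have "\<dots> = 1\<^sub>m n $$ (i,j)"
    proof (cases "i = j")
      case True thus ?thesis using cc[OF i] i by simp
    next
      case False thus ?thesis using corthogonalD[OF ws(2), of j i] ws(3) i j by auto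
    qed
    finally show "(mat_adjoint W * W) $$ (i,j) = 1\<^sub>m n $$ (i,j)" .
  qed (insert W, auto)
  have WW': "W * mat_adjoint W = 1\<^sub>m n"
    using mat_mult_left_right_inverse[OF adj_carrier[OF W] W WW] .
  define A' where "A' = mat_adjoint W * A * W"
  have A': "A' \<in> carrier_mat n n" unfolding A'_def using A W by auto
  have colW0: "col W 0 = c 0 \<cdot>\<^sub>v v"
    using v by (intro eq_vecI, insert n, auto simp: W_def ws0 carrier_vecD[OF v])
  have AW0: "A *\<^sub>v col W 0 = e \<cdot>\<^sub>v col W 0"
    unfolding colW0 using A eigen by (auto simp: mult_mat_vec smult_smult_assoc mult.commute)
  have A'0: "A' $$ (i,0) = (if i = 0 then e else 0)" if i: "i < n" for i
  proof -
    have "A' $$ (i,0) = (mat_adjoint W * (A * W)) $$ (i,0)" unfolding A'_def using A W by (subst assoc_mult_mat[of _ n n _ n _ n], auto)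
    also have "\<dots> = row (mat_adjoint W) i \<bullet> col (A * W) 0" using i n W A by auto
    also have "col (A * W) 0 = A *\<^sub>v col W 0" using n W A by auto
    also have "\<dots> = e \<cdot>\<^sub>v col W 0" by (rule AW0)
    also have "row (mat_adjoint W) i \<bullet> (e \<cdot>\<^sub>v col W 0) = e * (row (mat_adjoint W) i \<bullet> col W 0)"
      using W i n by (intro scalar_prod_smult_distrib[of _ n], auto)
    also have "row (mat_adjoint W) i \<bullet> col W 0 = (mat_adjoint W * W) $$ (i,0)" using W i n by auto
    also have "\<dots> = (if i = 0 then 1 else 0)" unfolding WW using i n by auto
    finally show ?thesis by auto
  qed
  have A'A_wit: "similar_mat_wit A' A (mat_adjoint W) W"
    by (rule similar_mat_witI[of _ _ n], insert W A A' WW WW', auto simp: A'_def)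
  hence A'A: "similar_mat A' A" unfolding similar_mat_def by blast
  from similar_mat_wit_sym[OF A'A_wit] have simAA': "similar_mat_wit A A' W (mat_adjoint W)" by auto
  obtain A1 A2 A0 A3 where splitA': "split_block A' 1 1 = (A1,A2,A0,A3)"
    by (cases "split_block A' 1 1", auto)
  from A' n have "dim_row A' = 1 + ?n1" "dim_col A' = 1 + ?n1" by auto
  from split_block[OF splitA' this] have A2: "A2 \<in> carrier_mat 1 ?n1"
    and A3: "A3 \<in> carrier_mat ?n1 ?n1"
    and A'block: "A' = four_block_mat A1 A2 A0 A3" by auto
  have A1id: "A1 = mat 1 1 (\<lambda> _. e)"
    using splitA'[unfolded split_block_def Let_def] A'0[of 0] A' n by auto
  have A1: "A1 \<in> carrier_mat 1 1" unfolding A1id by auto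
  have A0id: "A0 = 0\<^sub>m ?n1 1"
    using splitA'[unfolded split_block_def Let_def] A'0 A' by auto
  have A0: "A0 \<in> carrier_mat ?n1 1" unfolding A0id by auto
  from cp char_poly_similar[OF A'A]
  have cp: "char_poly A' = [: -e,1 :] * (\<Prod> e \<leftarrow> es. [:- e, 1:])" by simp
  also have "char_poly A' = char_poly A1 * char_poly A3"
    unfolding A'block A0id
    by (rule char_poly_four_block_zeros_col[OF A1 A2 A3])
  also have "char_poly A1 = [: -e,1 :]"
    by (simp add: A1id char_poly_defs det_def sign_def)
  finally have cp: "char_poly A3 = (\<Prod> e \<leftarrow> es. [:- e, 1:])"
    by (metis mult_cancel_left pCons_eq_0_iff zero_neq_one)
  from Cons(1)[OF A3 cp] obtain P3 T3 where P3: "unitary_mat ?n1 P3" and T3: "T3 \<in> carrier_mat ?n1 ?n1"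
    and ut3: "upper_triangular T3" and diag3: "diag_mat T3 = es" and A3eq: "A3 = P3 * T3 * mat_adjoint P3" by blast
  from P3 have P3c: "P3 \<in> carrier_mat ?n1 ?n1" and P3a: "P3 * mat_adjoint P3 = 1\<^sub>m ?n1"
    and P3b: "mat_adjoint P3 * P3 = 1\<^sub>m ?n1" unfolding unitary_mat_def by auto
  have simIH: "similar_mat_wit A3 T3 P3 (mat_adjoint P3)"
    by (rule similar_mat_witI[of _ _ ?n1], insert P3c P3a P3b T3 A3 A3eq, auto)
  let ?P' = "four_block_mat (1\<^sub>m 1) (0\<^sub>m 1 ?n1) (0\<^sub>m ?n1 1) P3"
  let ?Q' = "four_block_mat (1\<^sub>m 1) (0\<^sub>m 1 ?n1) (0\<^sub>m ?n1 1) (mat_adjoint P3)"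
  define T where "T = four_block_mat A1 (A2 * P3) A0 T3"
  have A0_eq: "A0 = P3 * A0 * 1\<^sub>m 1" unfolding A0id using P3c by auto
  have A2eq: "A2 = 1\<^sub>m 1 * (A2 * P3) * mat_adjoint P3"
  proof -
    have "1\<^sub>m 1 * (A2 * P3) * mat_adjoint P3 = A2 * (P3 * mat_adjoint P3)"
      using A2 P3c by (simp add: assoc_mult_mat[of A2 1 ?n1 P3 ?n1 "mat_adjoint P3" ?n1])
    thus ?thesis using P3a A2 by simp
  qed
  have simA'C: "similar_mat_wit A' T ?P' ?Q'" unfolding A'block T_def
    by (rule similar_mat_wit_four_block[OF similar_mat_wit_refl[OF A1] simIH A2eq A0_eq A1 A3 A0],
    insert A2 P3c, auto)
  have ut1: "upper_triangular A1" unfolding A1id by auto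
  have T3c: "T3 \<in> carrier_mat ?n1 ?n1" by fact
  have ut: "upper_triangular T" unfolding T_def A0id
    by (intro upper_triangular_four_block[OF _ T3c ut1 ut3], auto simp: A1id)
  from A1id have diagA1: "diag_mat A1 = [e]" unfolding diag_mat_def by auto
  from diag_four_block_mat[OF A1 T3c] have diag: "diag_mat T = e # es" unfolding diag3 diagA1 T_def by simp
  have sim: "similar_mat_wit A T (W * ?P') (?Q' * mat_adjoint W)"
    using similar_mat_wit_trans[OF simAA' simA'C] .
  have Q'eq: "?Q' = mat_adjoint ?P'"
    by (subst adj_four_block[of _ 1 1 _ ?n1 _ ?n1], insert P3c, auto)
  have P'c: "?P' \<in> carrier_mat n n" using P3c n by auto
  have Qeq: "?Q' * mat_adjoint W = mat_adjoint (W * ?P')"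
    unfolding Q'eq by (rule adj_mult[symmetric, OF W P'c])
  from similar_mat_witD2[OF A sim] have
    "(W * ?P') * (?Q' * mat_adjoint W) = 1\<^sub>m n" "(?Q' * mat_adjoint W) * (W * ?P') = 1\<^sub>m n"
    "A = (W * ?P') * T * (?Q' * mat_adjoint W)" "T \<in> carrier_mat n n" "W * ?P' \<in> carrier_mat n n"
    by auto
  thus ?case unfolding Qeq using ut diag
    by (intro exI[of _ "W * ?P'"] exI[of _ T], auto simp: unitary_mat_def)
qed



lemma (in vec_space) mult_col_in_span:
  assumes A: "A \<in> carrier_mat n k" and v: "v \<in> carrier_vec k"
  shows "A *\<^sub>v v \<in> span (set (cols A))"
proof -
  have cA: "set (cols A) \<subseteq> carrier_vec n" using A cols_dim by blast
  have dw: "\<forall>w \<in> set (cols A). dim_vec w = n" using cA by auto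
  have "lincomb_list (\<lambda>i. v $ i) (cols A) = A *\<^sub>v v"
  proof -
    have e1: "mat_of_cols n (cols A) = A" using A mat_of_cols_cols[of A] by auto
    have e2: "vec k (\<lambda>i. v $ i) = v" using v by (intro eq_vecI, auto)
    show ?thesis using lincomb_list_as_mat_mult[OF dw, of "\<lambda>i. v $ i"] e1 e2 A by (simp add: cols_length)
  qed
  moreover have "lincomb_list (\<lambda>i. v $ i) (cols A) \<in> span_list (cols A)"
    unfolding span_list_def by auto
  ultimately show ?thesis using span_list_as_span[OF cA] by auto
qed

lemma (in vec_space) cols_mult_in_span:
  assumes A: "A \<in> carrier_mat n k" and B: "B \<in> carrier_mat k l"
  shows "set (cols (A * B)) \<subseteq> span (set (cols A))"
proof
  fix x assume "x \<in> set (cols (A * B))"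
  then obtain j where j: "j < l" and x: "x = col (A * B) j"
    using A B by (auto simp: in_set_conv_nth cols_length)
  have "x = A *\<^sub>v col B j" using x j A B by auto
  thus "x \<in> span (set (cols A))" using mult_col_in_span[OF A] B j by auto
qed

lemma (in vec_space) rank_le_of_span:
  assumes A: "A \<in> carrier_mat n k" and X: "X \<in> carrier_mat n l"
    and sub: "set (cols X) \<subseteq> span (set (cols A))"
  shows "rank X \<le> rank A"
proof -
  define W1 where "W1 = span (set (cols A))"
  have cA: "set (cols A) \<subseteq> carrier_vec n" using A cols_dim by blast
  have cX: "set (cols X) \<subseteq> carrier_vec n" using X cols_dim by blast
  have sW1: "VectorSpace.subspace class_ring W1 V" unfolding W1_def using span_is_subspace cA by auto
  have sX: "VectorSpace.subspace class_ring (span (set (cols X))) V" using span_is_subspace cX by auto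
  have "span (set (cols X)) \<subseteq> W1"
    using span_is_subset[OF sub[folded W1_def]] sW1 unfolding subspace_def by auto
  from nested_subspaces[OF sW1 sX this]
  have subspace: "VectorSpace.subspace class_ring (span (set (cols X))) (vs W1)" .
  have fW1: "vectorspace.fin_dim class_ring (vs W1)" unfolding W1_def using fin_dim_span_cols[OF A] .
  have fX: "vectorspace.fin_dim class_ring (span_vs (set (cols X)))" using fin_dim_span_cols[OF X] .
  have "rank X \<le> vectorspace.dim class_ring (vs W1)" unfolding rank_def
    using vectorspace.subspace_dim[OF subspace_is_vs[OF sW1] subspace fW1] fX by auto
  thus ?thesis unfolding rank_def W1_def .
qed

lemma (in vec_space) rank_mult_le:
  assumes A: "A \<in> carrier_mat n k" and B: "B \<in> carrier_mat k l"
  shows "rank (A * B) \<le> rank A"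
  by (rule rank_le_of_span[OF A _ cols_mult_in_span[OF A B]], insert A B, auto)

lemma (in vec_space) rank_left_inv_diag:
  fixes Y :: "'a mat"
  assumes Y: "Y \<in> carrier_mat n z" and X: "X \<in> carrier_mat z n"
    and XY: "X * Y = Dz" and Dz: "\<And>a b. a < z \<Longrightarrow> b < z \<Longrightarrow> Dz $$ (a,b) = 0 \<longleftrightarrow> a \<noteq> b"
  shows "rank Y = z"
proof -
  have Dzc: "Dz \<in> carrier_mat z z" using XY X Y by auto
  have inj: "v = 0\<^sub>v z" if v: "v \<in> carrier_vec z" and Yv: "Y *\<^sub>v v = 0\<^sub>v n" for v
  proof -
    have "Dz *\<^sub>v v = X *\<^sub>v (Y *\<^sub>v v)" unfolding XY[symmetric] using X Y v by auto
    also have "\<dots> = 0\<^sub>v z" unfolding Yv using X by auto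
    finally have D0: "Dz *\<^sub>v v = 0\<^sub>v z" .
    show ?thesis
    proof (rule eq_vecI)
      fix a assume "a < dim_vec (0\<^sub>v z :: 'a vec)"
      hence a: "a < z" by auto
      have "(Dz *\<^sub>v v) $ a = (\<Sum>b\<in>{0..<z}. Dz $$ (a,b) * v $ b)"
        using a Dzc v by (auto simp: scalar_prod_def)
      also have "\<dots> = Dz $$ (a,a) * v $ a"
        by (rule sum.remove[THEN trans], insert a, auto intro!: sum.neutral simp: Dz)
      finally have "Dz $$ (a,a) * v $ a = 0" using D0 a by auto
      thus "v $ a = 0\<^sub>v z $ a" using Dz[OF a a] a by auto
    qed (insert v, auto)
  qed
  have dist: "distinct (cols Y)"
  proof (rule ccontr)
    assume "\<not> distinct (cols Y)"
    then obtain a b where ab: "a \<noteq> b" "a < z" "b < z" "col Y a = col Y b"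
      using Y by (auto simp: distinct_conv_nth cols_length)
    have "col Dz a = col Dz b" unfolding XY[symmetric] using ab X Y by auto
    hence "col Dz a $ a = col Dz b $ a" by simp
    hence "Dz $$ (a,a) = Dz $$ (a,b)" using ab Dzc by auto
    thus False using Dz[OF ab(2) ab(2)] Dz[OF ab(2) ab(3)] ab(1) by auto
  qed
  have "lin_indpt (set (cols Y))"
  proof
    assume "lin_dep (set (cols Y))"
    from lin_depE[OF Y this dist] obtain v where "v \<in> carrier_vec z" "v \<noteq> 0\<^sub>v z" "Y *\<^sub>v v = 0\<^sub>v n" .
    thus False using inj by auto
  qed
  thus ?thesis using lin_indpt_full_rank[OF Y dist] by auto
qed



lemma mcnj: "z * cnj z = (complex_of_real (cmod z))\<^sup>2"
  by (metis complex_norm_square of_real_power)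

lemma diag_sandwich:
  fixes A T B :: "complex mat"
  assumes A: "A \<in> carrier_mat n k" and T: "T \<in> carrier_mat k k" and dT: "diagonal_mat T"
    and B: "B \<in> carrier_mat k m" and i: "i < n" and j: "j < m"
  shows "(A * T * B) $$ (i,j) = (\<Sum>l<k. A $$ (i,l) * T $$ (l,l) * B $$ (l,j))"
proof -
  have "(A * T * B) $$ (i,j) = (\<Sum>l<k. (\<Sum>l'<k. A $$ (i,l') * T $$ (l',l)) * B $$ (l,j))"
    using A T B i j by (auto simp: scalar_prod_def lessThan_atLeast0 simp del: assoc_mult_mat intro!: sum.cong)
  also have "\<dots> = (\<Sum>l<k. A $$ (i,l) * T $$ (l,l) * B $$ (l,j))"
  proof (rule sum.cong[OF refl])
    fix l assume l: "l \<in> {..<k}"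
    have "(\<Sum>l'<k. A $$ (i,l') * T $$ (l',l)) = A $$ (i,l) * T $$ (l,l)"
      by (rule sum.remove[THEN trans], insert l T dT, auto intro!: sum.neutral simp: diagonal_mat_def)
    thus "(\<Sum>l'<k. A $$ (i,l') * T $$ (l',l)) * B $$ (l,j) = A $$ (i,l) * T $$ (l,l) * B $$ (l,j)" by simp
  qed
  finally show ?thesis .
qed

lemma adj_self_diag:
  fixes A :: "complex mat"
  assumes "i < dim_row A"
  shows "(A * mat_adjoint A) $$ (i,i) = complex_of_real (\<Sum>j<dim_col A. (cmod (A $$ (i,j)))\<^sup>2)"
  using assms by (auto simp: scalar_prod_def lessThan_atLeast0 mcnj intro!: sum.cong)

lemma adj_self_diag':
  fixes A :: "complex mat"
  assumes "j < dim_col A"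
  shows "(mat_adjoint A * A) $$ (j,j) = complex_of_real (\<Sum>k<dim_row A. (cmod (A $$ (k,j)))\<^sup>2)"
  using assms by (auto simp: scalar_prod_def lessThan_atLeast0 mcnj mult.commute intro!: sum.cong)

lemma unitary_upper_diag:
  fixes T :: "complex mat"
  assumes T: "T \<in> carrier_mat n n" and ut: "upper_triangular T"
    and u1: "mat_adjoint T * T = 1\<^sub>m n" and u2: "T * mat_adjoint T = 1\<^sub>m n"
  shows "diagonal_mat T"
proof -
  have main: "\<forall>j<n. j \<noteq> i \<longrightarrow> T $$ (i,j) = 0" if i: "i < n" for i
    using i
  proof (induct i rule: less_induct)
    case (less i)
    have col: "T $$ (k,i) = 0" if k: "k < n" "k \<noteq> i" for k
    proof (cases "k < i")
      case True thus ?thesis using less(1)[OF True] k less(2) by auto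
    next
      case False thus ?thesis using ut T k by (auto simp: upper_triangular_def)
    qed
    have "complex_of_real (\<Sum>k<n. (cmod (T $$ (k,i)))\<^sup>2) = 1"
      using adj_self_diag'[of i T] u1 T less(2) by auto
    hence c1: "(\<Sum>k<n. (cmod (T $$ (k,i)))\<^sup>2) = 1" by (simp only: of_real_eq_1_iff)
    have "(\<Sum>k<n. (cmod (T $$ (k,i)))\<^sup>2) = (cmod (T $$ (i,i)))\<^sup>2"
      by (rule sum.remove[THEN trans], insert less(2) col, auto intro!: sum.neutral)
    with c1 have tii: "(cmod (T $$ (i,i)))\<^sup>2 = 1" by simp
    have "complex_of_real (\<Sum>j<n. (cmod (T $$ (i,j)))\<^sup>2) = 1"
      using adj_self_diag[of i T] u2 T less(2) by auto
    hence r1: "(\<Sum>j<n. (cmod (T $$ (i,j)))\<^sup>2) = 1" by (simp only: of_real_eq_1_iff)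
    have "(\<Sum>j<n. (cmod (T $$ (i,j)))\<^sup>2) = (cmod (T $$ (i,i)))\<^sup>2 + (\<Sum>j\<in>{..<n}-{i}. (cmod (T $$ (i,j)))\<^sup>2)"
      by (rule sum.remove, insert less(2), auto)
    with r1 tii have z: "(\<Sum>j\<in>{..<n}-{i}. (cmod (T $$ (i,j)))\<^sup>2) = 0" by simp
    show ?case
    proof (intro allI impI)
      fix j assume j: "j < n" "j \<noteq> i"
      from z have "\<forall>j\<in>{..<n}-{i}. (cmod (T $$ (i,j)))\<^sup>2 = 0"
        by (subst (asm) sum_nonneg_eq_0_iff, auto)
      thus "T $$ (i,j) = 0" using j by auto
    qed
  qed
  show ?thesis unfolding diagonal_mat_def using main T by auto
qed

lemma hermitian_upper_diag:
  fixes T :: "complex mat"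
  assumes T: "T \<in> carrier_mat n n" and ut: "upper_triangular T" and h: "mat_adjoint T = T"
  shows "diagonal_mat T"
  unfolding diagonal_mat_def
proof (intro allI impI)
  fix i j assume i: "i < dim_row T" and j: "j < dim_col T" and ij: "i \<noteq> j"
  show "T $$ (i,j) = 0"
  proof (cases "j < i")
    case True thus ?thesis using ut i by auto
  next
    case False
    hence "i < j" using ij by auto
    hence "T $$ (j,i) = 0" using ut j T by auto
    moreover have "T $$ (i,j) = cnj (T $$ (j,i))" using arg_cong[OF h, of "\<lambda>M. M $$ (i,j)"] i j T by auto
    ultimately show ?thesis by simp
  qed
qed

definition tr :: "complex mat \<Rightarrow> complex" where
  "tr A = (\<Sum>i<dim_row A. A $$ (i,i))"

lemma tr_comm:
  assumes A: "A \<in> carrier_mat n k" and B: "B \<in> carrier_mat k n"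
  shows "tr (A * B) = tr (B * A)"
proof -
  have "tr (A * B) = (\<Sum>i<n. \<Sum>l<k. A $$ (i,l) * B $$ (l,i))"
    unfolding tr_def using A B by (auto simp: scalar_prod_def lessThan_atLeast0 intro!: sum.cong)
  also have "\<dots> = (\<Sum>l<k. \<Sum>i<n. B $$ (l,i) * A $$ (i,l))"
    by (subst sum.swap, simp add: mult.commute)
  also have "\<dots> = tr (B * A)"
    unfolding tr_def using A B by (auto simp: scalar_prod_def lessThan_atLeast0 intro!: sum.cong)
  finally show ?thesis .
qed

lemma tr_diag_mult:
  assumes E: "E \<in> carrier_mat n n" "diagonal_mat E" and S: "S \<in> carrier_mat n n"
  shows "tr (E * S) = (\<Sum>k<n. E $$ (k,k) * S $$ (k,k))"
  unfolding tr_def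
proof -
  have "(E * S) $$ (k,k) = E $$ (k,k) * S $$ (k,k)" if k: "k < n" for k
  proof -
    have "(E * S) $$ (k,k) = (\<Sum>l<n. E $$ (k,l) * S $$ (l,k))"
      using E S k by (auto simp: scalar_prod_def lessThan_atLeast0)
    also have "\<dots> = E $$ (k,k) * S $$ (k,k)"
      by (rule sum.remove[THEN trans], insert k E, auto intro!: sum.neutral simp: diagonal_mat_def)
    finally show ?thesis .
  qed
  thus "(\<Sum>i<dim_row (E * S). (E * S) $$ (i, i)) = (\<Sum>k<n. E $$ (k, k) * S $$ (k, k))"
    using E by auto
qed

lemma tr_sandwich:
  fixes P E R :: "complex mat"
  assumes P: "P \<in> carrier_mat n n" and E: "E \<in> carrier_mat n n" and R: "R \<in> carrier_mat n n"
  shows "tr (P * E * mat_adjoint P * R) = tr (E * (mat_adjoint P * R * P))"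
proof -
  have Pa: "mat_adjoint P \<in> carrier_mat n n" using P by auto
  have "P * E * mat_adjoint P * R = (P * E) * (mat_adjoint P * R)"
    by (rule assoc_mult_mat[of "P * E" n n "mat_adjoint P" n R n], insert P E R Pa, auto)
  hence "tr (P * E * mat_adjoint P * R) = tr ((mat_adjoint P * R) * (P * E))"
    using tr_comm[of "P * E" n n "mat_adjoint P * R"] P E R Pa by (simp del: assoc_mult_mat)
  also have "(mat_adjoint P * R) * (P * E) = (mat_adjoint P * R * P) * E"
    by (rule assoc_mult_mat[of "mat_adjoint P * R" n n P n E n, symmetric], insert P E R Pa, auto)
  also have "tr \<dots> = tr (E * (mat_adjoint P * R * P))"
    by (rule tr_comm[of "mat_adjoint P * R * P" n n E], insert P E R Pa, auto simp del: assoc_mult_mat)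
  finally show ?thesis .
qed



lemma rank_decomp:
  fixes R Q T :: "complex mat"
  assumes Q: "unitary_mat n Q" and T: "T \<in> carrier_mat n n" "diagonal_mat T"
    and R: "R = Q * T * mat_adjoint Q" and zn: "z \<le> n"
    and nz: "\<And>k. k < n \<Longrightarrow> T $$ (k,k) \<noteq> 0 \<longleftrightarrow> k < z"
  shows "vec_space.rank n R = z"
proof -
  interpret vec_space "TYPE(complex)" n .
  from Q have Qc: "Q \<in> carrier_mat n n" and QQ: "mat_adjoint Q * Q = 1\<^sub>m n"
    unfolding unitary_mat_def by auto
  have Rc: "R \<in> carrier_mat n n" using R Qc T by auto
  have QHQ: "(\<Sum>i<n. cnj (Q $$ (i,a)) * Q $$ (i,b)) = (if a = b then 1 else 0)"
    if a: "a < n" and b: "b < n" for a b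
  proof -
    have "(mat_adjoint Q * Q) $$ (a,b) = (\<Sum>i<n. cnj (Q $$ (i,a)) * Q $$ (i,b))"
      using a b Qc by (auto simp: scalar_prod_def lessThan_atLeast0)
    thus ?thesis unfolding QQ using a b by auto
  qed
  have Rent: "R $$ (i,j) = (\<Sum>l<n. Q $$ (i,l) * T $$ (l,l) * cnj (Q $$ (j,l)))"
    if i: "i < n" and j: "j < n" for i j
    unfolding R by (subst diag_sandwich[OF Qc T adj_carrier[OF Qc] i j], insert i j Qc, auto intro!: sum.cong)
  have T0: "T $$ (k,k) = 0" if "z \<le> k" "k < n" for k using nz[of k] that by auto
  define Qz where "Qz = mat n z (\<lambda>(i,l). Q $$ (i,l))"
  define Tz where "Tz = mat z z (\<lambda>(a,b). T $$ (a,b))"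
  have Qzc: "Qz \<in> carrier_mat n z" and Tzc: "Tz \<in> carrier_mat z z" unfolding Qz_def Tz_def by auto
  have dTz: "diagonal_mat Tz" using T zn unfolding Tz_def diagonal_mat_def by auto
  have Req: "R = Qz * (Tz * mat_adjoint Qz)"
  proof (rule eq_matI)
    fix i j assume i: "i < dim_row (Qz * (Tz * mat_adjoint Qz))" and j: "j < dim_col (Qz * (Tz * mat_adjoint Qz))"
    hence i: "i < n" and j: "j < n" using Qzc Tzc by auto
    have "Qz * (Tz * mat_adjoint Qz) = Qz * Tz * mat_adjoint Qz"
      by (rule assoc_mult_mat[symmetric, of Qz n z Tz z "mat_adjoint Qz" n], insert Qzc Tzc, auto)
    hence "(Qz * (Tz * mat_adjoint Qz)) $$ (i,j) = (\<Sum>l<z. Qz $$ (i,l) * Tz $$ (l,l) * mat_adjoint Qz $$ (l,j))"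
      using diag_sandwich[OF Qzc Tzc dTz adj_carrier[OF Qzc] i j] by simp
    also have "\<dots> = (\<Sum>l<z. Q $$ (i,l) * T $$ (l,l) * cnj (Q $$ (j,l)))"
      using i j Qzc zn by (auto simp: Qz_def Tz_def intro!: sum.cong)
    also have "\<dots> = (\<Sum>l<n. Q $$ (i,l) * T $$ (l,l) * cnj (Q $$ (j,l)))"
      by (rule sum.mono_neutral_left, insert zn, auto simp: T0)
    finally show "R $$ (i,j) = (Qz * (Tz * mat_adjoint Qz)) $$ (i,j)" using Rent[OF i j] by simp
  qed (insert Rc Qzc Tzc, auto)
  have TQ: "Tz * mat_adjoint Qz \<in> carrier_mat z n" using Tzc Qzc by auto
  have "rank R \<le> rank Qz"
    by (rule rank_le_of_span[OF Qzc Rc], unfold Req, rule cols_mult_in_span[OF Qzc TQ])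
  also have "\<dots> \<le> z" using rank_le_nc[OF Qzc] .
  finally have up: "rank R \<le> z" .
  define Y where "Y = mat n z (\<lambda>(i,b). Q $$ (i,b) * T $$ (b,b))"
  have Yc: "Y \<in> carrier_mat n z" unfolding Y_def by auto
  have RQz: "R * Qz = Y"
  proof (rule eq_matI)
    fix i b assume i: "i < dim_row Y" and b: "b < dim_col Y"
    hence i: "i < n" and b: "b < z" unfolding Y_def by auto
    have "(R * Qz) $$ (i,b) = (\<Sum>j<n. R $$ (i,j) * Q $$ (j,b))"
      using i b Rc Qzc by (auto simp: scalar_prod_def lessThan_atLeast0 Qz_def)
    also have "\<dots> = (\<Sum>j<n. \<Sum>l<n. Q $$ (i,l) * T $$ (l,l) * (cnj (Q $$ (j,l)) * Q $$ (j,b)))"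
      by (rule sum.cong[OF refl], subst Rent[OF i], auto simp: sum_distrib_right mult.assoc)
    also have "\<dots> = (\<Sum>l<n. Q $$ (i,l) * T $$ (l,l) * (\<Sum>j<n. cnj (Q $$ (j,l)) * Q $$ (j,b)))"
      by (subst sum.swap, simp add: sum_distrib_left)
    also have "\<dots> = (\<Sum>l<n. Q $$ (i,l) * T $$ (l,l) * (if l = b then 1 else 0))"
      by (rule sum.cong[OF refl], subst QHQ, insert b zn, auto)
    also have "\<dots> = Q $$ (i,b) * T $$ (b,b)"
      using b zn by (auto simp: if_distrib cong: if_cong)
    finally show "(R * Qz) $$ (i,b) = Y $$ (i,b)" using i b unfolding Y_def by auto
  qed (insert Rc Qzc Yc, auto)
  have XY: "mat_adjoint Qz * Y = mat z z (\<lambda>(a,b). if a = b then T $$ (b,b) else 0)"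
  proof (rule eq_matI)
    fix a b assume a: "a < dim_row (mat z z (\<lambda>(a,b). if a = b then T $$ (b,b) else 0))"
      and b: "b < dim_col (mat z z (\<lambda>(a,b). if a = b then T $$ (b,b) else 0))"
    hence a: "a < z" and b: "b < z" by auto
    have "(mat_adjoint Qz * Y) $$ (a,b) = (\<Sum>i<n. cnj (Q $$ (i,a)) * Q $$ (i,b)) * T $$ (b,b)"
      using a b Qzc Yc zn by (auto simp: scalar_prod_def lessThan_atLeast0 Qz_def Y_def sum_distrib_right
          mult.assoc intro!: sum.cong)
    also have "\<dots> = (if a = b then T $$ (b,b) else 0)" using QHQ[of a b] a b zn by auto
    finally show "(mat_adjoint Qz * Y) $$ (a,b) = mat z z (\<lambda>(a,b). if a = b then T $$ (b,b) else 0) $$ (a,b)"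
      using a b by auto
  qed (insert Qzc Yc, auto)
  have "rank Y = z"
    by (rule rank_left_inv_diag[OF Yc adj_carrier[OF Qzc] XY], insert nz zn, auto)
  moreover have "rank Y \<le> rank R" unfolding RQz[symmetric] by (rule rank_mult_le[OF Rc Qzc])
  ultimately show ?thesis using up by auto
qed



lemma bound_K:
  fixes d w :: "nat \<Rightarrow> real"
  assumes zn: "z \<le> n" and d0: "\<forall>l<n. 0 \<le> d l" and dz: "\<forall>l. z \<le> l \<and> l < n \<longrightarrow> d l = 0"
    and dd: "\<forall>l<z. \<delta> \<le> d l" and d1: "(\<Sum>l<n. d l) = 1" and d00: "0 \<le> \<delta>"
    and w: "\<forall>l<n. 0 \<le> w l \<and> w l \<le> 1" and wK: "(\<Sum>l<n. w l) \<le> K" and Kz: "K + 1 \<le> real z"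
  shows "(\<Sum>l<n. d l * w l) \<le> 1 - \<delta>"
proof -
  have e1: "(\<Sum>l<n. d l * w l) = (\<Sum>l<z. d l * w l)"
    by (rule sum.mono_neutral_right, insert zn dz, auto)
  have e2: "(\<Sum>l<z. d l) = 1" using d1
    by (metis (no_types, lifting) dz finite_lessThan lessThan_iff lessThan_subset_iff not_less
        sum.mono_neutral_right zn DiffE)
  have w2: "(\<Sum>l<z. w l) \<le> (\<Sum>l<n. w l)"
    by (rule sum_mono2, insert zn w, auto)
  have "(\<Sum>l<z. \<delta> * (1 - w l)) \<le> (\<Sum>l<z. d l * (1 - w l))"
    by (rule sum_mono, rule mult_right_mono, insert dd w zn, auto)
  moreover have "(\<Sum>l<z. \<delta> * (1 - w l)) = \<delta> * (real z - (\<Sum>l<z. w l))"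
    by (simp add: sum_subtractf sum_distrib_left[symmetric])
  moreover have "\<delta> * 1 \<le> \<delta> * (real z - (\<Sum>l<z. w l))"
    by (rule mult_left_mono, insert w2 wK Kz d00, auto)
  moreover have "(\<Sum>l<z. d l * (1 - w l)) = 1 - (\<Sum>l<z. d l * w l)"
    using e2 by (simp add: algebra_simps sum_subtractf)
  ultimately show ?thesis using e1 by linarith
qed

lemma bound_mix:
  fixes s :: "nat \<Rightarrow> real" and t :: "nat \<Rightarrow> complex"
  assumes s0: "\<forall>k<n. 0 \<le> s k" and s1: "(\<Sum>k<n. s k) = 1" and t1: "\<forall>k<n. cmod (t k) = 1"
    and g0: "0 \<le> \<gamma>" and gt: "\<forall>k<n. \<forall>k'<n. t k \<noteq> t k' \<longrightarrow> Re (t k * cnj (t k')) \<le> 1 - \<gamma>"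
    and sd: "\<forall>k<n. (\<Sum>k'<n. if t k' = t k then s k' else 0) \<le> 1 - \<delta>"
  shows "(cmod (\<Sum>k<n. complex_of_real (s k) * t k))\<^sup>2 \<le> 1 - \<gamma> * \<delta>"
proof -
  define x where "x = (\<Sum>k<n. complex_of_real (s k) * t k)"
  have "complex_of_real ((cmod x)\<^sup>2) = x * cnj x" by (rule complex_norm_square)
  hence cx: "(cmod x)\<^sup>2 = Re (x * cnj x)" by (metis Re_complex_of_real)
  have "x * cnj x = (\<Sum>k<n. \<Sum>k'<n. complex_of_real (s k * s k') * (t k * cnj (t k')))"
    unfolding x_def by (simp add: cnj_sum sum_product algebra_simps)
  hence "Re (x * cnj x) = (\<Sum>k<n. \<Sum>k'<n. s k * s k' * Re (t k * cnj (t k')))"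
    by (simp add: Re_sum)
  also have "\<dots> \<le> (\<Sum>k<n. \<Sum>k'<n. s k * s k' * ((1 - \<gamma>) + \<gamma> * (if t k' = t k then 1 else 0)))"
  proof (intro sum_mono mult_left_mono)
    fix k k' assume k: "k \<in> {..<n}" and k': "k' \<in> {..<n}"
    show "0 \<le> s k * s k'" using s0 k k' by auto
    show "Re (t k * cnj (t k')) \<le> (1 - \<gamma>) + \<gamma> * (if t k' = t k then 1 else 0)"
    proof (cases "t k' = t k")
      case True
      have "Re (t k * cnj (t k)) = (cmod (t k))\<^sup>2"
        by (metis Re_complex_of_real complex_norm_square)
      thus ?thesis using True t1 k by auto
    next
      case False thus ?thesis using gt k k' by auto
    qed
  qed
  also have "\<dots> = (1 - \<gamma>) * (\<Sum>k<n. s k) * (\<Sum>k'<n. s k') + \<gamma> * (\<Sum>k<n. s k * (\<Sum>k'<n. if t k' = t k then s k' else 0))"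
  proof -
    have "(\<Sum>k<n. \<Sum>k'<n. s k * s k' * ((1 - \<gamma>) + \<gamma> * (if t k' = t k then 1 else 0)))
      = (\<Sum>k<n. \<Sum>k'<n. (1 - \<gamma>) * (s k * s k') + \<gamma> * (s k * (if t k' = t k then s k' else 0)))"
      by (intro sum.cong refl, auto simp: algebra_simps)
    also have "\<dots> = (1 - \<gamma>) * (\<Sum>k<n. \<Sum>k'<n. s k * s k') + \<gamma> * (\<Sum>k<n. s k * (\<Sum>k'<n. if t k' = t k then s k' else 0))"
      by (simp add: sum.distrib sum_distrib_left)
    also have "(\<Sum>k<n. \<Sum>k'<n. s k * s k') = (\<Sum>k<n. s k) * (\<Sum>k'<n. s k')"
      by (simp add: sum_product)
    finally show ?thesis by (simp add: algebra_simps)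
  qed
  also have "\<dots> \<le> (1 - \<gamma>) + \<gamma> * (\<Sum>k<n. s k * (1 - \<delta>))"
    using s1 by (auto intro!: mult_left_mono sum_mono g0 simp: s0 sd)
  also have "(\<Sum>k<n. s k * (1 - \<delta>)) = 1 - \<delta>" using s1 by (simp add: sum_distrib_right[symmetric])
  also have "(1 - \<gamma>) + \<gamma> * (1 - \<delta>) = 1 - \<gamma> * \<delta>" by (simp add: algebra_simps)
  finally show ?thesis unfolding x_def[symmetric] cx .
qed



lemma sum_reshape: fixes g :: "nat \<Rightarrow> 'a::comm_monoid_add" and n m :: nat
  shows "(\<Sum>k<n*m. g k) = (\<Sum>i<n. \<Sum>j<m. g (i*m+j))"
proof -
  have "(\<Sum>k<n*m. g k) = (\<Sum>i<n. \<Sum>k\<in>{i*m..<i*m+m}. g k)"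
    using sum.nat_group[of g m n] by simp
  also have "\<dots> = (\<Sum>i<n. \<Sum>j<m. g (i*m+j))"
  proof (rule sum.cong[OF refl])
    fix i
    have "(\<Sum>k\<in>{i*m..<i*m+m}. g k) = (\<Sum>k\<in>{0+i*m..<m+i*m}. g k)" by (simp add: add.commute)
    also have "\<dots> = (\<Sum>j\<in>{0..<m}. g (j+i*m))" by (rule sum.shift_bounds_nat_ivl)
    finally show "(\<Sum>k\<in>{i*m..<i*m+m}. g k) = (\<Sum>j<m. g (i*m+j))"
      by (simp add: lessThan_atLeast0 add.commute)
  qed
  finally show ?thesis .
qed

lemma idx_lt: assumes i: "i < (n::nat)" and j: "j < m" shows "i*m+j < n*m"
proof -
  have "i*m+j < (i+1)*m" using j by simp
  also have "(i+1)*m \<le> n*m" using i by (intro mult_right_mono, auto)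
  finally show ?thesis .
qed

definition coef :: "nat \<Rightarrow> nat \<Rightarrow> complex vec \<Rightarrow> complex mat" where
  "coef n m psi = mat n m (\<lambda>(i,j). psi $ (i*m+j))"

lemma coef_carrier[simp]: "coef n m psi \<in> carrier_mat n m" unfolding coef_def by auto

lemma ptrace_eq: "partial_trace_B n m psi = coef n m psi * mat_adjoint (coef n m psi)"
  by (rule eq_matI, auto simp: partial_trace_B_def coef_def scalar_prod_def lessThan_atLeast0)

lemma ptrace_carrier[simp]: "partial_trace_B n m psi \<in> carrier_mat n n"
  unfolding partial_trace_B_def by auto

lemma tr_ptrace: "tr (partial_trace_B n m psi) = psi \<bullet>c psi" if "psi \<in> carrier_vec (n*m)"
proof -
  have "tr (partial_trace_B n m psi) = (\<Sum>i<n. \<Sum>j<m. psi $ (i*m+j) * cnj (psi $ (i*m+j)))"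
    unfolding tr_def partial_trace_B_def by auto
  also have "\<dots> = (\<Sum>k<n*m. psi $ k * cnj (psi $ k))" by (rule sum_reshape[symmetric])
  also have "\<dots> = psi \<bullet>c psi" using that by (auto simp: scalar_prod_def lessThan_atLeast0)
  finally show ?thesis .
qed

lemma expval_tr:
  assumes W: "W \<in> carrier_mat n n" and psi: "psi \<in> carrier_vec (n*m)"
  shows "expval psi (tensor_id n m W) = tr (W * partial_trace_B n m psi)"
proof -
  let ?M = "tensor_id n m W"
  have Mv: "(?M *\<^sub>v psi) $ (i*m+j) = (\<Sum>i'<n. W $$ (i,i') * psi $ (i'*m+j))"
    if i: "i < n" and j: "j < m" for i j
  proof -
    have k: "i*m+j < n*m" using idx_lt[OF i j] .
    have "(?M *\<^sub>v psi) $ (i*m+j) = (\<Sum>l<n*m. ?M $$ (i*m+j, l) * psi $ l)"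
      using k psi by (auto simp: tensor_id_def scalar_prod_def lessThan_atLeast0)
    also have "\<dots> = (\<Sum>i'<n. \<Sum>j'<m. ?M $$ (i*m+j, i'*m+j') * psi $ (i'*m+j'))"
      by (rule sum_reshape)
    also have "\<dots> = (\<Sum>i'<n. \<Sum>j'<m. (if j' = j then W $$ (i,i') else 0) * psi $ (i'*m+j'))"
    proof (intro sum.cong refl)
      fix i' j' assume i': "i' \<in> {..<n}" and j': "j' \<in> {..<m}"
      have k': "i'*m+j' < n*m" using idx_lt i' j' by auto
      show "?M $$ (i*m+j, i'*m+j') * psi $ (i'*m+j') = (if j' = j then W $$ (i,i') else 0) * psi $ (i'*m+j')"
        using k k' j j' by (auto simp: tensor_id_def)
    qed
    also have "\<dots> = (\<Sum>i'<n. \<Sum>j'<m. if j' = j then W $$ (i,i') * psi $ (i'*m+j') else 0)"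
      by (intro sum.cong refl, auto)
    also have "\<dots> = (\<Sum>i'<n. W $$ (i,i') * psi $ (i'*m+j))"
      using j by (simp add: sum.delta)
    finally show ?thesis .
  qed
  have "expval psi ?M = (\<Sum>k<n*m. (?M *\<^sub>v psi) $ k * cnj (psi $ k))"
    unfolding expval_def using psi by (auto simp: scalar_prod_def lessThan_atLeast0 tensor_id_def)
  also have "\<dots> = (\<Sum>i<n. \<Sum>j<m. (?M *\<^sub>v psi) $ (i*m+j) * cnj (psi $ (i*m+j)))" by (rule sum_reshape)
  also have "\<dots> = (\<Sum>i<n. \<Sum>j<m. \<Sum>i'<n. W $$ (i,i') * (psi $ (i'*m+j) * cnj (psi $ (i*m+j))))"
    by (intro sum.cong refl, simp add: Mv sum_distrib_right mult.assoc)
  also have "\<dots> = (\<Sum>i<n. \<Sum>i'<n. W $$ (i,i') * (\<Sum>j<m. psi $ (i'*m+j) * cnj (psi $ (i*m+j))))"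
    by (rule sum.cong[OF refl], subst sum.swap, simp add: sum_distrib_left)
  also have "\<dots> = tr (W * partial_trace_B n m psi)"
    unfolding tr_def using W by (auto simp: partial_trace_B_def scalar_prod_def lessThan_atLeast0 intro!: sum.cong)
  finally show ?thesis .
qed



lemma prod_perm: "mset xs = mset ys \<Longrightarrow> (\<Prod>a\<leftarrow>xs. f a) = (\<Prod>a\<leftarrow>ys. (f a :: 'b :: comm_monoid_mult))"
  by (simp add: prod_mset_prod_list[symmetric])

lemma prod_mset_list: "mset xs = M \<Longrightarrow> prod_mset (image_mset f M) = (\<Prod>a\<leftarrow>xs. (f a :: 'b :: comm_monoid_mult))"
  by (simp add: prod_mset_prod_list[symmetric])

lemma unitary_conj_back:
  fixes Q T R :: "complex mat"
  assumes Q: "unitary_mat n Q" and T: "T \<in> carrier_mat n n" and R: "R = Q * T * mat_adjoint Q"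
  shows "mat_adjoint Q * R * Q = T"
proof -
  from Q have Qc: "Q \<in> carrier_mat n n" and QQ: "mat_adjoint Q * Q = 1\<^sub>m n"
    unfolding unitary_mat_def by auto
  have Qa: "mat_adjoint Q \<in> carrier_mat n n" using Qc by auto
  have "mat_adjoint Q * R * Q = (mat_adjoint Q * Q) * T * (mat_adjoint Q * Q)"
    unfolding R using Qc Qa T by (simp add: mult_carrier_mat[of _ n n _ n] assoc_mult_mat[of _ n n _ n _ n])
  thus ?thesis unfolding QQ using T by simp
qed

lemma rho_decomp:
  fixes psi :: "complex vec"
  assumes psi: "psi \<in> carrier_vec (n*m)" and u: "psi \<bullet>c psi = 1"
  shows "\<exists>Q T z. unitary_mat n Q \<and> T \<in> carrier_mat n n \<and> diagonal_mat T
     \<and> partial_trace_B n m psi = Q * T * mat_adjoint Q \<and> z \<le> n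
     \<and> (\<forall>k<n. T $$ (k,k) \<noteq> 0 \<longleftrightarrow> k < z)
     \<and> (\<forall>k<n. T $$ (k,k) = complex_of_real (Re (T $$ (k,k))) \<and> Re (T $$ (k,k)) \<ge> 0)
     \<and> (\<Sum>k<n. Re (T $$ (k,k))) = 1"
proof -
  define R where "R = partial_trace_B n m psi"
  define C where "C = coef n m psi"
  have Rc: "R \<in> carrier_mat n n" unfolding R_def by auto
  have Cc: "C \<in> carrier_mat n m" unfolding C_def by auto
  have RC: "R = C * mat_adjoint C" unfolding R_def C_def by (rule ptrace_eq)
  have Rh: "mat_adjoint R = R" unfolding RC using adj_mult[OF Cc adj_carrier[OF Cc]] by simp
  from char_poly_factorized[OF Rc] obtain as where cp: "char_poly R = (\<Prod>a\<leftarrow>as. [:- a, 1:])"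
    and las: "length as = n" by auto
  define es where "es = filter (\<lambda>x. x \<noteq> 0) as @ filter (\<lambda>x. x = 0) as"
  define z where "z = length (filter (\<lambda>x. x \<noteq> 0) as)"
  have mes: "mset es = mset as" unfolding es_def by (induct as, auto)
  have les: "length es = n" using arg_cong[OF mes, of size] las by simp
  have zn: "z \<le> n" unfolding z_def using las by auto
  have cp2: "char_poly R = (\<Prod>a\<leftarrow>es. [:- a, 1:])" unfolding cp by (rule prod_perm[OF mes[symmetric]])
  from unitary_schur[OF Rc cp2] obtain Q T where Q: "unitary_mat n Q" and T: "T \<in> carrier_mat n n"
    and ut: "upper_triangular T" and dT: "diag_mat T = es" and RQ: "R = Q * T * mat_adjoint Q" by blast
  have Qc: "Q \<in> carrier_mat n n" using Q unfolding unitary_mat_def by auto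
  have Tb: "T = mat_adjoint Q * R * Q" using unitary_conj_back[OF Q T RQ] by simp
  have Qa: "mat_adjoint Q \<in> carrier_mat n n" using Qc by auto
  have "mat_adjoint T = mat_adjoint Q * mat_adjoint (mat_adjoint Q * R)"
    unfolding Tb by (rule adj_mult[of _ n n], insert Qa Rc Qc, auto)
  also have "mat_adjoint (mat_adjoint Q * R) = mat_adjoint R * Q"
    using adj_mult[OF Qa Rc] by simp
  also have "mat_adjoint Q * (mat_adjoint R * Q) = T" unfolding Rh Tb using Qa Rc Qc
    by (simp add: assoc_mult_mat[of _ n n _ n _ n])
  finally have Th: "mat_adjoint T = T" .
  have diagT: "diagonal_mat T" by (rule hermitian_upper_diag[OF T ut Th])
  have Tkk: "T $$ (k,k) = es ! k" if "k < n" for k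
  proof -
    have "diag_mat T ! k = T $$ (k,k)" using that T by (simp add: diag_mat_def)
    thus ?thesis unfolding dT by simp
  qed
  have nz: "T $$ (k,k) \<noteq> 0 \<longleftrightarrow> k < z" if k: "k < n" for k
  proof (cases "k < z")
    case True
    hence "es ! k = filter (\<lambda>x. x \<noteq> 0) as ! k" unfolding es_def z_def by (simp add: nth_append)
    moreover have "filter (\<lambda>x. x \<noteq> 0) as ! k \<in> set (filter (\<lambda>x. x \<noteq> 0) as)"
      by (rule nth_mem, insert True, simp add: z_def)
    hence "filter (\<lambda>x. x \<noteq> 0) as ! k \<noteq> 0" by simp
    ultimately show ?thesis using Tkk[OF k] True by auto
  next
    case False
    hence "es ! k = filter (\<lambda>x. x = 0) as ! (k - z)" unfolding es_def z_def by (simp add: nth_append)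
    moreover have "k - z < length (filter (\<lambda>x. x = 0) as)" using les k False unfolding es_def z_def by auto
    hence "filter (\<lambda>x. x = 0) as ! (k - z) \<in> set (filter (\<lambda>x. x = 0) as)" by (rule nth_mem)
    hence "filter (\<lambda>x. x = 0) as ! (k - z) = 0" by simp
    ultimately show ?thesis using Tkk[OF k] False by auto
  qed
  define D where "D = mat_adjoint Q * C"
  have Dc: "D \<in> carrier_mat n m" unfolding D_def using Qa Cc by auto
  have TD: "T = D * mat_adjoint D"
  proof -
    have "T = mat_adjoint Q * (C * mat_adjoint C) * Q" unfolding Tb RC ..
    also have "\<dots> = (mat_adjoint Q * C) * (mat_adjoint C * Q)"
    proof -
      have "mat_adjoint Q * (C * mat_adjoint C) = (mat_adjoint Q * C) * mat_adjoint C"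
        by (rule assoc_mult_mat[symmetric, of _ n n _ m _ n], insert Qa Cc, auto)
      moreover have "(mat_adjoint Q * C) * mat_adjoint C * Q = (mat_adjoint Q * C) * (mat_adjoint C * Q)"
        by (rule assoc_mult_mat[of _ n m _ n _ n], insert Qa Cc Qc, auto)
      ultimately show ?thesis by simp
    qed
    also have "mat_adjoint C * Q = mat_adjoint D" unfolding D_def using adj_mult[OF Qa Cc] by simp
    finally show ?thesis unfolding D_def .
  qed
  have pos: "T $$ (k,k) = complex_of_real (Re (T $$ (k,k))) \<and> Re (T $$ (k,k)) \<ge> 0" if k: "k < n" for k
  proof -
    have "T $$ (k,k) = complex_of_real (\<Sum>j<m. (cmod (D $$ (k,j)))\<^sup>2)"
      unfolding TD using adj_self_diag[of k D] Dc k by auto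
    thus ?thesis by (auto intro: sum_nonneg)
  qed
  have "tr T = tr R"
  proof -
    have "tr T = tr (mat_adjoint Q * (R * Q))" unfolding Tb using Qa Rc Qc
      by (simp add: assoc_mult_mat[of _ n n _ n _ n])
    also have "\<dots> = tr ((R * Q) * mat_adjoint Q)" by (rule tr_comm[OF Qa], insert Rc Qc, auto)
    also have "(R * Q) * mat_adjoint Q = R * (Q * mat_adjoint Q)" using Rc Qc Qa
      by (simp add: assoc_mult_mat[of _ n n _ n _ n])
    also have "Q * mat_adjoint Q = 1\<^sub>m n" using Q unfolding unitary_mat_def by auto
    finally show ?thesis using Rc by simp
  qed
  also have "tr R = 1" unfolding R_def using tr_ptrace[OF psi] u by simp
  finally have trT: "tr T = 1" .
  have "(\<Sum>k<n. Re (T $$ (k,k))) = Re (tr T)" unfolding tr_def using T by (simp add: Re_sum)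
  hence s1: "(\<Sum>k<n. Re (T $$ (k,k))) = 1" using trT by simp
  show ?thesis
    by (rule exI[of _ Q], rule exI[of _ T], rule exI[of _ z], insert Q T diagT RQ zn nz pos s1,
        auto simp: R_def)
qed



lemma cancel_left:
  fixes A B X :: "complex mat"
  assumes "A \<in> carrier_mat n n" "B \<in> carrier_mat n n" "A * B = 1\<^sub>m n" "X \<in> carrier_mat n k"
  shows "A * (B * X) = X"
proof -
  have "A * (B * X) = (A * B) * X" by (rule assoc_mult_mat[symmetric, of A n n B n X k], insert assms, auto)
  thus ?thesis using assms by simp
qed

definition diagm :: "nat \<Rightarrow> complex list \<Rightarrow> complex mat" where
  "diagm n es = mat n n (\<lambda>(i,j). if i = j then es ! i else 0)"

lemma diagm_carrier[simp]: "diagm n es \<in> carrier_mat n n" unfolding diagm_def by auto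
lemma diagm_diag: "diagonal_mat (diagm n es)" unfolding diagm_def diagonal_mat_def by auto
lemma diagm_idx[simp]: "k < n \<Longrightarrow> diagm n es $$ (k,k) = es ! k" unfolding diagm_def by auto

lemma unitary_mult:
  fixes A B :: "complex mat"
  assumes A: "unitary_mat n A" and B: "unitary_mat n B"
  shows "unitary_mat n (A * B)"
proof -
  from A B have Ac: "A \<in> carrier_mat n n" and Bc: "B \<in> carrier_mat n n"
    and A1: "A * mat_adjoint A = 1\<^sub>m n" and A2: "mat_adjoint A * A = 1\<^sub>m n"
    and B1: "B * mat_adjoint B = 1\<^sub>m n" and B2: "mat_adjoint B * B = 1\<^sub>m n"
    unfolding unitary_mat_def by auto
  have adj: "mat_adjoint (A * B) = mat_adjoint B * mat_adjoint A" by (rule adj_mult[OF Ac Bc])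
  have "A * B * mat_adjoint (A * B) = A * (B * (mat_adjoint B * mat_adjoint A))" unfolding adj
    by (rule assoc_mult_mat[of _ n n _ n _ n], insert Ac Bc, auto)
  also have "B * (mat_adjoint B * mat_adjoint A) = mat_adjoint A"
    by (rule cancel_left[OF Bc _ B1], insert Ac Bc, auto)
  finally have 1: "A * B * mat_adjoint (A * B) = 1\<^sub>m n" using A1 by simp
  have "mat_adjoint (A * B) * (A * B) = mat_adjoint B * (mat_adjoint A * (A * B))" unfolding adj
    by (rule assoc_mult_mat[of _ n n _ n _ n], insert Ac Bc, auto)
  also have "mat_adjoint A * (A * B) = B"
    by (rule cancel_left[OF _ Ac A2], insert Ac Bc, auto)
  finally have 2: "mat_adjoint (A * B) * (A * B) = 1\<^sub>m n" using B2 by simp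
  show ?thesis using 1 2 Ac Bc unfolding unitary_mat_def by auto
qed

lemma unitary_adj:
  fixes A :: "complex mat"
  shows "unitary_mat n A \<Longrightarrow> unitary_mat n (mat_adjoint A)"
  unfolding unitary_mat_def by auto

lemma W_constr:
  fixes Q :: "complex mat"
  assumes Q: "unitary_mat n Q" and es: "mset es = Lam" and len: "length es = n"
    and unit: "\<forall>a \<in># Lam. cmod a = 1"
  shows "Q * diagm n es * mat_adjoint Q \<in> W_spec n Lam"
proof -
  let ?E = "diagm n es"
  from Q have Qc: "Q \<in> carrier_mat n n" and Q1: "Q * mat_adjoint Q = 1\<^sub>m n" and Q2: "mat_adjoint Q * Q = 1\<^sub>m n"
    unfolding unitary_mat_def by auto
  have Ec: "?E \<in> carrier_mat n n" by simp
  have esu: "cmod (es ! i) = 1" if "i < n" for i using unit es len that by (metis nth_mem set_mset_mset)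
  have EE: "?E * mat_adjoint ?E = 1\<^sub>m n"
  proof (rule eq_matI)
    fix i j assume i: "i < dim_row (1\<^sub>m n :: complex mat)" and j: "j < dim_col (1\<^sub>m n :: complex mat)"
    hence i: "i < n" and j: "j < n" by auto
    have "(?E * mat_adjoint ?E) $$ (i,j) = (\<Sum>l<n. (if i = l then es ! i else 0) * cnj (if j = l then es ! j else 0))"
      using i j by (auto simp: diagm_def scalar_prod_def lessThan_atLeast0 intro!: sum.cong)
    also have "\<dots> = (\<Sum>l<n. if l = i then (if i = j then es ! i * cnj (es ! i) else 0) else 0)"
      by (intro sum.cong refl, auto)
    also have "\<dots> = (if i = j then es ! i * cnj (es ! i) else 0)" using i by (simp add: sum.delta)
    also have "\<dots> = 1\<^sub>m n $$ (i,j)" using esu[OF i] i j by (auto simp: mcnj)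
    finally show "(?E * mat_adjoint ?E) $$ (i,j) = 1\<^sub>m n $$ (i,j)" .
  qed (auto simp: diagm_def)
  have EE2: "mat_adjoint ?E * ?E = 1\<^sub>m n"
    using mat_mult_left_right_inverse[OF Ec adj_carrier[OF Ec] EE] .
  have uE: "unitary_mat n ?E" unfolding unitary_mat_def using EE EE2 by auto
  have uW: "unitary_mat n (Q * ?E * mat_adjoint Q)"
    by (rule unitary_mult[OF unitary_mult[OF Q uE] unitary_adj[OF Q]])
  have sim: "similar_mat (Q * ?E * mat_adjoint Q) ?E"
    by (rule similar_matI[of _ _ Q "mat_adjoint Q" n], insert Qc Q1 Q2, auto)
  have ut: "upper_triangular ?E" unfolding diagm_def upper_triangular_def by auto
  have "char_poly (Q * ?E * mat_adjoint Q) = char_poly ?E" by (rule char_poly_similar[OF sim])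
  also have "\<dots> = (\<Prod>a\<leftarrow>diag_mat ?E. [:- a, 1:])" by (rule char_poly_upper_triangular[OF Ec ut])
  also have "diag_mat ?E = es" unfolding diag_mat_def using len
    by (intro nth_equalityI, auto simp: diagm_def)
  also have "(\<Prod>a\<leftarrow>es. [:- a, 1:]) = prod_mset (image_mset (\<lambda>a. [:-a, 1:]) Lam)"
    by (rule prod_mset_list[symmetric, OF es])
  finally show ?thesis unfolding W_spec_def using uW by auto
qed

lemma W_value:
  fixes W Q T R :: "complex mat"
  assumes W: "W \<in> W_spec n Lam" and size: "size Lam = n"
    and Q: "unitary_mat n Q" and T: "T \<in> carrier_mat n n" "diagonal_mat T"
    and R: "R = Q * T * mat_adjoint Q"
  shows "\<exists>L V. mset L = Lam \<and> length L = n \<and> unitary_mat n V \<and>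
     tr (W * R) = (\<Sum>k<n. L ! k * (\<Sum>l<n. T $$ (l,l) * complex_of_real ((cmod (V $$ (k,l)))\<^sup>2)))"
proof -
  from W have uW: "unitary_mat n W" and cpW: "char_poly W = prod_mset (image_mset (\<lambda>a. [:-a, 1:]) Lam)"
    unfolding W_spec_def by auto
  from uW have Wc: "W \<in> carrier_mat n n" and W1: "W * mat_adjoint W = 1\<^sub>m n" and W2: "mat_adjoint W * W = 1\<^sub>m n"
    unfolding unitary_mat_def by auto
  obtain L where L: "mset L = Lam" using ex_mset by blast
  have lenL: "length L = n" using arg_cong[OF L, of size] size by simp
  have cp: "char_poly W = (\<Prod>a\<leftarrow>L. [:-a, 1:])" unfolding cpW by (rule prod_mset_list[OF L])
  from unitary_schur[OF Wc cp] obtain P T' where P: "unitary_mat n P" and T': "T' \<in> carrier_mat n n"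
    and ut: "upper_triangular T'" and dT': "diag_mat T' = L" and WP: "W = P * T' * mat_adjoint P" by blast
  from P have Pc: "P \<in> carrier_mat n n" and P1: "P * mat_adjoint P = 1\<^sub>m n" and P2: "mat_adjoint P * P = 1\<^sub>m n"
    unfolding unitary_mat_def by auto
  from Q have Qc: "Q \<in> carrier_mat n n" and Q1: "Q * mat_adjoint Q = 1\<^sub>m n" and Q2: "mat_adjoint Q * Q = 1\<^sub>m n"
    unfolding unitary_mat_def by auto
  have T'eq: "T' = mat_adjoint P * W * P" using unitary_conj_back[OF P T' WP] by simp
  have uT': "unitary_mat n T'" unfolding T'eq
    by (rule unitary_mult[OF unitary_mult[OF unitary_adj[OF P] uW] P])
  have dgT': "diagonal_mat T'"
    by (rule unitary_upper_diag[OF T' ut], insert uT', auto simp: unitary_mat_def)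
  have T'kk: "T' $$ (k,k) = L ! k" if "k < n" for k
  proof -
    have "diag_mat T' ! k = T' $$ (k,k)" using that T' by (simp add: diag_mat_def)
    thus ?thesis unfolding dT' by simp
  qed
  have Rc: "R \<in> carrier_mat n n" unfolding R using Qc T by auto
  define V where "V = mat_adjoint P * Q"
  have uV: "unitary_mat n V" unfolding V_def by (rule unitary_mult[OF unitary_adj[OF P] Q])
  have Vc: "V \<in> carrier_mat n n" unfolding V_def using Pc Qc by auto
  have Va: "mat_adjoint V = mat_adjoint Q * P" unfolding V_def using adj_mult[OF adj_carrier[OF Pc] Qc] by simp
  have "mat_adjoint P * R * P = (mat_adjoint P * Q) * T * (mat_adjoint Q * P)"
    unfolding R using Pc Qc T by (simp add: assoc_mult_mat[of _ n n _ n _ n] mult_carrier_mat[of _ n n _ n])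
  hence sig: "mat_adjoint P * R * P = V * T * mat_adjoint V" using Va unfolding V_def by simp
  have "tr (W * R) = tr (T' * (mat_adjoint P * R * P))" unfolding WP by (rule tr_sandwich[OF Pc T' Rc])
  also have "\<dots> = (\<Sum>k<n. T' $$ (k,k) * (mat_adjoint P * R * P) $$ (k,k))"
    by (rule tr_diag_mult[OF T' dgT'], insert Pc Rc, auto)
  also have "\<dots> = (\<Sum>k<n. L ! k * (\<Sum>l<n. T $$ (l,l) * complex_of_real ((cmod (V $$ (k,l)))\<^sup>2)))"
  proof (rule sum.cong[OF refl])
    fix k assume k: "k \<in> {..<n}"
    have "(V * T * mat_adjoint V) $$ (k,k) = (\<Sum>l<n. V $$ (k,l) * T $$ (l,l) * mat_adjoint V $$ (l,k))"
      by (rule diag_sandwich[OF Vc T adj_carrier[OF Vc]], insert k, auto)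
    also have "\<dots> = (\<Sum>l<n. T $$ (l,l) * complex_of_real ((cmod (V $$ (k,l)))\<^sup>2))"
      using k Vc by (auto simp: mcnj[symmetric] intro!: sum.cong)
    finally show "T' $$ (k,k) * (mat_adjoint P * R * P) $$ (k,k) = L ! k * (\<Sum>l<n. T $$ (l,l) * complex_of_real ((cmod (V $$ (k,l)))\<^sup>2))"
      unfolding sig using T'kk k by simp
  qed
  finally show ?thesis using L lenL uV by blast
qed



lemma unit_re_lt:
  fixes a b :: complex
  assumes a: "cmod a = 1" and b: "cmod b = 1" and ab: "a \<noteq> b"
  shows "Re (a * cnj b) < 1"
proof -
  let ?c = "a * cnj b"
  have cc: "cmod ?c = 1" using a b by (simp add: norm_mult)
  have le: "Re ?c \<le> 1" using complex_Re_le_cmod[of ?c] cc by simp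
  show ?thesis
  proof (rule ccontr)
    assume "\<not> Re ?c < 1"
    hence re: "Re ?c = 1" using le by auto
    have "(cmod ?c)\<^sup>2 = (Re ?c)\<^sup>2 + (Im ?c)\<^sup>2" by (rule cmod_power2)
    hence "Im ?c = 0" using cc re by simp
    hence c1: "?c = 1" using re by (simp add: complex_eq_iff)
    have bb: "cnj b * b = 1"
      by (metis b complex_norm_square mult.commute of_real_1 power_one)
    have "a = a * (cnj b * b)" using bb by simp
    also have "\<dots> = ?c * b" by (simp add: mult.assoc)
    also have "\<dots> = b" using c1 by simp
    finally show False using ab by simp
  qed
qed

lemma example_state:
  assumes n: "2 \<le> n" and m: "2 \<le> m"
  shows "\<exists>psi. unit_state n m psi \<and> schmidt_rank n m psi = 2"
proof -
  define c :: complex where "c = complex_of_real (1 / sqrt 2)"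
  define psi where "psi = vec (n*m) (\<lambda>k. if k div m = k mod m \<and> k div m < 2 then c else 0)"
  have psic: "psi \<in> carrier_vec (n*m)" unfolding psi_def by auto
  have mpos: "0 < m" using m by auto
  have pidx: "psi $ (i*m+j) = (if i = j \<and> i < 2 then c else 0)" if i: "i < n" and j: "j < m" for i j
    using idx_lt[OF i j] j mpos unfolding psi_def by auto
  have cc: "c * cnj c = 1/2"
  proof -
    have "c * cnj c = complex_of_real ((1 / sqrt 2) * (1 / sqrt 2))" unfolding c_def
      by (simp only: complex_cnj_complex_of_real of_real_mult)
    also have "(1 / sqrt 2) * (1 / sqrt 2) = (1/2 :: real)" by (simp add: real_sqrt_mult[symmetric])
    finally show ?thesis by simp
  qed
  define R where "R = partial_trace_B n m psi"
  have Rc: "R \<in> carrier_mat n n" unfolding R_def by simp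
  have Rent: "R $$ (i,i') = (if i = i' \<and> i < 2 then 1/2 else 0)" if i: "i < n" and i': "i' < n" for i i'
  proof -
    have "R $$ (i,i') = (\<Sum>j<m. psi $ (i*m+j) * cnj (psi $ (i'*m+j)))"
      unfolding R_def partial_trace_B_def using i i' by simp
    also have "\<dots> = (\<Sum>j<m. if j = i then (if i = i' \<and> i < 2 then c * cnj c else 0) else 0)"
      by (intro sum.cong refl, auto simp: pidx i i')
    also have "\<dots> = (if i = i' \<and> i < 2 then 1/2 else 0)"
      using m cc by (auto simp: sum.delta)
    finally show ?thesis .
  qed
  have "psi \<bullet>c psi = tr R" unfolding R_def using tr_ptrace[OF psic] by simp
  also have "tr R = (\<Sum>i<n. if i < 2 then 1/2 else 0)" unfolding tr_def using Rc Rent by auto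
  also have "\<dots> = (\<Sum>i<(2::nat). if i < 2 then 1/2 else (0::complex))"
    by (rule sum.mono_neutral_right, insert n, auto)
  also have "\<dots> = 1" by (simp add: numeral_2_eq_2)
  finally have u: "psi \<bullet>c psi = 1" .
  have diagR: "diagonal_mat R" unfolding diagonal_mat_def using Rc Rent by auto
  have "vec_space.rank n R = 2"
    by (rule rank_decomp[of n "1\<^sub>m n" R], insert Rc diagR Rent n,
        auto simp: unitary_mat_def)
  thus ?thesis using psic u unfolding unit_state_def schmidt_rank_def R_def by blast
qed



lemma key:
  fixes n m :: nat and Lam :: "complex multiset" and psi :: "complex vec"
  assumes n0: "0 < n" and nm: "n \<le> m" and size: "size Lam = n" and unit: "\<forall>a \<in># Lam. cmod a = 1"
    and us: "unit_state n m psi"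
  shows "(E_Lam n m Lam psi = 0 \<longleftrightarrow> schmidt_rank n m psi \<le> max_mult Lam) \<and> 1 \<le> schmidt_rank n m psi"
proof -
  define r where "r = max_mult Lam"
  have Lne: "set_mset Lam \<noteq> {}" using size n0 by auto
  have fin: "finite (count Lam ` set_mset Lam)" by auto
  have cnt_le: "count Lam a \<le> r" for a
  proof (cases "a \<in># Lam")
    case True thus ?thesis unfolding r_def max_mult_def using fin by (intro Max_ge, auto)
  next
    case False thus ?thesis by (simp add: not_in_iff)
  qed
  have "r \<in> count Lam ` set_mset Lam" unfolding r_def max_mult_def using fin Lne by (intro Max_in, auto)
  then obtain mu where mu: "mu \<in># Lam" and cmu: "count Lam mu = r" by auto
  have mu1: "cmod mu = 1" using unit mu by auto
  define G where "G = (\<lambda>(a,b). 1 - Re (a * cnj b)) ` {(a,b). a \<in># Lam \<and> b \<in># Lam \<and> a \<noteq> b}"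
  define \<gamma> where "\<gamma> = Min (insert 1 G)"
  have finG: "finite G" unfolding G_def
    by (rule finite_imageI, rule finite_subset[of _ "set_mset Lam \<times> set_mset Lam"], auto)
  have Gpos: "\<forall>x \<in> insert 1 G. 0 < x"
  proof
    fix x assume "x \<in> insert 1 G"
    then consider "x = 1" | a b where "a \<in># Lam" "b \<in># Lam" "a \<noteq> b" "x = 1 - Re (a * cnj b)"
      unfolding G_def by auto
    thus "0 < x"
    proof cases
      case 2 thus ?thesis using unit_re_lt[of a b] unit by auto
    qed simp
  qed
  have gpos: "0 < \<gamma>" unfolding \<gamma>_def using Gpos finG by (subst Min_gr_iff, auto)
  have gle: "Re (a * cnj b) \<le> 1 - \<gamma>" if "a \<in># Lam" "b \<in># Lam" "a \<noteq> b" for a b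
  proof -
    have "1 - Re (a * cnj b) \<in> G" unfolding G_def using that by force
    hence "\<gamma> \<le> 1 - Re (a * cnj b)" unfolding \<gamma>_def using finG by (intro Min_le, auto)
    thus ?thesis by simp
  qed
  from us have psic: "psi \<in> carrier_vec (n*m)" and u: "psi \<bullet>c psi = 1" unfolding unit_state_def by auto
  define R where "R = partial_trace_B n m psi"
  have Rc: "R \<in> carrier_mat n n" unfolding R_def by simp
  from rho_decomp[OF psic u] obtain Q T z where Q: "unitary_mat n Q" and T: "T \<in> carrier_mat n n"
    and dT: "diagonal_mat T" and RQ: "R = Q * T * mat_adjoint Q" and zn: "z \<le> n"
    and nz: "\<forall>k<n. T $$ (k,k) \<noteq> 0 \<longleftrightarrow> k < z"
    and pos: "\<forall>k<n. T $$ (k,k) = complex_of_real (Re (T $$ (k,k))) \<and> Re (T $$ (k,k)) \<ge> 0"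
    and s1: "(\<Sum>k<n. Re (T $$ (k,k))) = 1"
    unfolding R_def by blast
  define d where "d = (\<lambda>k. Re (T $$ (k,k)))"
  have Tkk: "T $$ (k,k) = complex_of_real (d k)" if "k < n" for k using pos that unfolding d_def by auto
  have d0: "0 \<le> d k" if "k < n" for k using pos that unfolding d_def by auto
  have dz: "d k = 0" if "z \<le> k" "k < n" for k using nz Tkk that by fastforce
  have dpos: "0 < d k" if "k < z" for k
  proof -
    have "T $$ (k,k) \<noteq> 0" using nz that zn by auto
    hence "d k \<noteq> 0" using Tkk[of k] that zn by auto
    thus ?thesis using d0[of k] that zn by auto
  qed
  have d1: "(\<Sum>k<n. d k) = 1" using s1 unfolding d_def .
  have rank: "schmidt_rank n m psi = z"
    unfolding schmidt_rank_def R_def[symmetric] by (rule rank_decomp[OF Q T dT RQ zn], insert nz, auto)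
  have z1: "1 \<le> z"
  proof (rule ccontr)
    assume "\<not> 1 \<le> z"
    hence "z = 0" by auto
    hence "(\<Sum>k<n. d k) = 0" using dz by auto
    thus False using d1 by simp
  qed
  define S where "S = {(cmod (expval psi (tensor_id n m W)))\<^sup>2 | W. W \<in> W_spec n Lam}"
  have F: "F_Lam n m Lam psi = Sup S" unfolding F_Lam_def S_def ..
  have exptr: "expval psi (tensor_id n m W) = tr (W * R)" if "W \<in> W_spec n Lam" for W
    unfolding R_def by (rule expval_tr[OF _ psic], insert that, auto simp: W_spec_def unitary_mat_def)
  have est: "(cmod (expval psi (tensor_id n m W)))\<^sup>2 \<le> 1 - \<gamma>' * \<delta>'"
    if W: "W \<in> W_spec n Lam" and g0: "0 \<le> \<gamma>'"
      and gt': "\<forall>a b. a \<in># Lam \<longrightarrow> b \<in># Lam \<longrightarrow> a \<noteq> b \<longrightarrow> Re (a * cnj b) \<le> 1 - \<gamma>'"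
      and sdh: "\<And>(L::complex list) (V :: complex mat) k. mset L = Lam \<Longrightarrow> length L = n \<Longrightarrow> unitary_mat n V \<Longrightarrow> k < n \<Longrightarrow>
          (\<Sum>k'<n. if L ! k' = L ! k then (\<Sum>l<n. d l * (cmod (V $$ (k',l)))\<^sup>2) else 0) \<le> 1 - \<delta>'"
    for W \<gamma>' \<delta>'
  proof -
    from W_value[OF W size Q T dT RQ] obtain L V where L: "mset L = Lam" and lenL: "length L = n"
      and V: "unitary_mat n V"
      and tre: "tr (W * R) = (\<Sum>k<n. L ! k * (\<Sum>l<n. T $$ (l,l) * complex_of_real ((cmod (V $$ (k,l)))\<^sup>2)))"
      by blast
    define s where "s = (\<lambda>k. \<Sum>l<n. d l * (cmod (V $$ (k,l)))\<^sup>2)"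
    have Vc: "V \<in> carrier_mat n n" using V unfolding unitary_mat_def by auto
    have colV: "(\<Sum>k<n. (cmod (V $$ (k,l)))\<^sup>2) = 1" if "l < n" for l
    proof -
      have "complex_of_real (\<Sum>k<n. (cmod (V $$ (k,l)))\<^sup>2) = (mat_adjoint V * V) $$ (l,l)"
        using adj_self_diag'[of l V] Vc that by auto
      also have "\<dots> = 1" using V that unfolding unitary_mat_def by auto
      finally show ?thesis by (simp only: of_real_eq_1_iff)
    qed
    have "tr (W * R) = (\<Sum>k<n. complex_of_real (s k) * L ! k)"
      unfolding tre s_def by (intro sum.cong refl, auto simp: Tkk of_real_sum mult.commute)
    hence ev: "expval psi (tensor_id n m W) = (\<Sum>k<n. complex_of_real (s k) * L ! k)" using exptr[OF W] by simp
    have Lin: "L ! k \<in># Lam" if "k < n" for k using L lenL that by (metis nth_mem set_mset_mset)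
    show ?thesis unfolding ev
    proof (rule bound_mix[OF _ _ _ g0])
      show "\<forall>k<n. 0 \<le> s k" unfolding s_def using d0 by (auto intro!: sum_nonneg)
      have "(\<Sum>k<n. s k) = (\<Sum>l<n. d l * (\<Sum>k<n. (cmod (V $$ (k,l)))\<^sup>2))"
        unfolding s_def by (subst sum.swap, simp add: sum_distrib_left)
      also have "\<dots> = (\<Sum>l<n. d l)" by (rule sum.cong, auto simp: colV)
      finally show "(\<Sum>k<n. s k) = 1" using d1 by simp
      show "\<forall>k<n. cmod (L ! k) = 1" using Lin unit by auto
      show "\<forall>k<n. \<forall>k'<n. L ! k \<noteq> L ! k' \<longrightarrow> Re (L ! k * cnj (L ! k')) \<le> 1 - \<gamma>'"
        using gt' Lin by auto
      show "\<forall>k<n. (\<Sum>k'<n. if L ! k' = L ! k then s k' else 0) \<le> 1 - \<delta>'"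
        using sdh[OF L lenL V] unfolding s_def by auto
    qed
  qed
  have ub: "x \<le> 1" if "x \<in> S" for x
  proof -
    from that obtain W where W: "W \<in> W_spec n Lam" and x: "x = (cmod (expval psi (tensor_id n m W)))\<^sup>2"
      unfolding S_def by auto
    have "x \<le> 1 - 0 * 0" unfolding x
    proof (rule est[OF W])
      show "\<forall>a b. a \<in># Lam \<longrightarrow> b \<in># Lam \<longrightarrow> a \<noteq> b \<longrightarrow> Re (a * cnj b) \<le> 1 - 0"
        using unit_re_lt unit by (auto intro: less_imp_le)
      fix L :: "complex list" and V :: "complex mat" and k
      assume L: "mset L = Lam" "length L = n" and V: "unitary_mat n V" and k: "k < n"
      have Vc: "V \<in> carrier_mat n n" using V unfolding unitary_mat_def by auto
      have colV: "(\<Sum>k<n. (cmod (V $$ (k,l)))\<^sup>2) = 1" if "l < n" for l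
      proof -
        have "complex_of_real (\<Sum>k<n. (cmod (V $$ (k,l)))\<^sup>2) = (mat_adjoint V * V) $$ (l,l)"
          using adj_self_diag'[of l V] Vc that by auto
        also have "\<dots> = 1" using V that unfolding unitary_mat_def by auto
        finally show ?thesis by (simp only: of_real_eq_1_iff)
      qed
      have "(\<Sum>k'<n. if L ! k' = L ! k then (\<Sum>l<n. d l * (cmod (V $$ (k',l)))\<^sup>2) else 0)
          \<le> (\<Sum>k'<n. (\<Sum>l<n. d l * (cmod (V $$ (k',l)))\<^sup>2))"
        by (rule sum_mono, auto intro!: sum_nonneg simp: d0)
      also have "\<dots> = (\<Sum>l<n. d l * (\<Sum>k'<n. (cmod (V $$ (k',l)))\<^sup>2))"
        by (subst sum.swap, simp add: sum_distrib_left)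
      also have "\<dots> = 1" using d1 by (simp add: colV)
      finally show "(\<Sum>k'<n. if L ! k' = L ! k then (\<Sum>l<n. d l * (cmod (V $$ (k',l)))\<^sup>2) else 0) \<le> 1 - 0" by simp
    qed simp
    thus ?thesis by simp
  qed
  obtain L0 where L0: "mset L0 = Lam" using ex_mset by blast
  have lenL0: "length L0 = n" using arg_cong[OF L0, of size] size by simp
  have W0: "Q * diagm n L0 * mat_adjoint Q \<in> W_spec n Lam" by (rule W_constr[OF Q L0 lenL0 unit])
  have Sne: "S \<noteq> {}" unfolding S_def using W0 by auto
  show ?thesis
  proof (cases "z \<le> r")
    case True
    define es where "es = replicate r mu @ filter (\<lambda>x. x \<noteq> mu) L0"
    have mes: "mset es = Lam"
    proof (rule multiset_eqI)
      fix a show "count (mset es) a = count Lam a"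
        unfolding es_def using L0 cmu by auto
    qed
    have les: "length es = n" using arg_cong[OF mes, of size] size by simp
    define W where "W = Q * diagm n es * mat_adjoint Q"
    have W: "W \<in> W_spec n Lam" unfolding W_def by (rule W_constr[OF Q mes les unit])
    have Qc: "Q \<in> carrier_mat n n" using Q unfolding unitary_mat_def by auto
    have "tr (W * R) = tr (diagm n es * (mat_adjoint Q * R * Q))"
      unfolding W_def by (rule tr_sandwich[OF Qc _ Rc], auto)
    also have "mat_adjoint Q * R * Q = T" by (rule unitary_conj_back[OF Q T RQ])
    also have "tr (diagm n es * T) = (\<Sum>k<n. diagm n es $$ (k,k) * T $$ (k,k))"
      by (rule tr_diag_mult[OF _ diagm_diag T], auto)
    also have "\<dots> = (\<Sum>k<n. mu * complex_of_real (d k))"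
    proof (rule sum.cong[OF refl])
      fix k assume k: "k \<in> {..<n}"
      show "diagm n es $$ (k,k) * T $$ (k,k) = mu * complex_of_real (d k)"
      proof (cases "k < z")
        case True
        hence "es ! k = mu" unfolding es_def using \<open>z \<le> r\<close> by (simp add: nth_append)
        thus ?thesis using k Tkk by auto
      next
        case False thus ?thesis using k Tkk dz by auto
      qed
    qed
    also have "\<dots> = mu" using d1 by (simp add: sum_distrib_left[symmetric] of_real_sum[symmetric])
    finally have "expval psi (tensor_id n m W) = mu" using exptr[OF W] by simp
    hence "1 \<in> S" unfolding S_def using W mu1 by force
    hence "Sup S = 1" using ub by (intro cSup_eq_maximum, auto)
    hence "E_Lam n m Lam psi = 0" unfolding E_Lam_def F by simp
    thus ?thesis using rank True z1 unfolding r_def by auto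
  next
    case False
    hence zr: "r < z" by auto
    define \<delta> where "\<delta> = Min (d ` {..<z})"
    have "0 \<in> {..<z}" using z1 by auto
    hence dne: "d ` {..<z} \<noteq> {}" by blast
    have dpos': "0 < \<delta>" unfolding \<delta>_def using dne dpos by (subst Min_gr_iff, auto)
    have dle: "\<delta> \<le> d l" if "l < z" for l unfolding \<delta>_def using that by (intro Min_le, auto)
    have strict: "x \<le> 1 - \<gamma> * \<delta>" if "x \<in> S" for x
    proof -
      from that obtain W where W: "W \<in> W_spec n Lam" and x: "x = (cmod (expval psi (tensor_id n m W)))\<^sup>2"
        unfolding S_def by auto
      show ?thesis unfolding x
      proof (rule est[OF W less_imp_le[OF gpos]])
        show "\<forall>a b. a \<in># Lam \<longrightarrow> b \<in># Lam \<longrightarrow> a \<noteq> b \<longrightarrow> Re (a * cnj b) \<le> 1 - \<gamma>"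
          using gle by auto
        fix L :: "complex list" and V :: "complex mat" and k
        assume L: "mset L = Lam" and lenL: "length L = n" and V: "unitary_mat n V" and k: "k < n"
        have Vc: "V \<in> carrier_mat n n" using V unfolding unitary_mat_def by auto
        have colV: "(\<Sum>k<n. (cmod (V $$ (k,l)))\<^sup>2) = 1" if "l < n" for l
        proof -
          have "complex_of_real (\<Sum>k<n. (cmod (V $$ (k,l)))\<^sup>2) = (mat_adjoint V * V) $$ (l,l)"
            using adj_self_diag'[of l V] Vc that by auto
          also have "\<dots> = 1" using V that unfolding unitary_mat_def by auto
          finally show ?thesis by (simp only: of_real_eq_1_iff)
        qed
        have rowV: "(\<Sum>l<n. (cmod (V $$ (k,l)))\<^sup>2) = 1" if "k < n" for k
        proof -
          have "complex_of_real (\<Sum>l<n. (cmod (V $$ (k,l)))\<^sup>2) = (V * mat_adjoint V) $$ (k,k)"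
            using adj_self_diag[of k V] Vc that by auto
          also have "\<dots> = 1" using V that unfolding unitary_mat_def by auto
          finally show ?thesis by (simp only: of_real_eq_1_iff)
        qed
        define w where "w = (\<lambda>l. \<Sum>k'<n. if L ! k' = L ! k then (cmod (V $$ (k',l)))\<^sup>2 else 0)"
        have e1: "(\<Sum>k'<n. if L ! k' = L ! k then (\<Sum>l<n. d l * (cmod (V $$ (k',l)))\<^sup>2) else 0)
            = (\<Sum>l<n. d l * w l)"
        proof -
          have "(\<Sum>k'<n. if L ! k' = L ! k then (\<Sum>l<n. d l * (cmod (V $$ (k',l)))\<^sup>2) else 0)
            = (\<Sum>k'<n. \<Sum>l<n. if L ! k' = L ! k then d l * (cmod (V $$ (k',l)))\<^sup>2 else 0)"
            by (rule sum.cong[OF refl], simp)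
          also have "\<dots> = (\<Sum>l<n. \<Sum>k'<n. if L ! k' = L ! k then d l * (cmod (V $$ (k',l)))\<^sup>2 else 0)"
            by (rule sum.swap)
          also have "\<dots> = (\<Sum>l<n. d l * w l)"
            unfolding w_def sum_distrib_left by (intro sum.cong refl, simp)
          finally show ?thesis .
        qed
        have w01: "\<forall>l<n. 0 \<le> w l \<and> w l \<le> 1"
        proof (intro allI impI conjI)
          fix l assume l: "l < n"
          show "0 \<le> w l" unfolding w_def by (auto intro!: sum_nonneg)
          have "w l \<le> (\<Sum>k'<n. (cmod (V $$ (k',l)))\<^sup>2)" unfolding w_def by (rule sum_mono, auto)
          thus "w l \<le> 1" using colV[OF l] by simp
        qed
        have "(\<Sum>l<n. w l) = (\<Sum>k'<n. if L ! k' = L ! k then (\<Sum>l<n. (cmod (V $$ (k',l)))\<^sup>2) else 0)"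
          unfolding w_def by (subst sum.swap, auto simp: if_distrib intro!: sum.cong)
        also have "\<dots> = (\<Sum>k'<n. if L ! k' = L ! k then 1 else 0)" by (rule sum.cong, auto simp: rowV)
        also have "\<dots> = real (card {k'. k' < n \<and> L ! k' = L ! k})"
          by (simp add: sum.If_cases Int_def lessThan_def)
        also have "card {k'. k' < n \<and> L ! k' = L ! k} = count Lam (L ! k)"
          unfolding L[symmetric] count_mset count_list_eq_length_filter length_filter_conv_card lenL
          by (intro arg_cong[where f = card], auto)
        finally have wsum: "(\<Sum>l<n. w l) \<le> real r" using cnt_le[of "L ! k"] by simp
        have "(\<Sum>l<n. d l * w l) \<le> 1 - \<delta>"
          by (rule bound_K[OF zn _ _ _ d1 _ w01 wsum], insert d0 dz dle dpos' zr, auto)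
        thus "(\<Sum>k'<n. if L ! k' = L ! k then (\<Sum>l<n. d l * (cmod (V $$ (k',l)))\<^sup>2) else 0) \<le> 1 - \<delta>"
          unfolding e1 .
      qed
    qed
    have "Sup S \<le> 1 - \<gamma> * \<delta>" using Sne strict by (intro cSup_least, auto)
    moreover have "0 < \<gamma> * \<delta>" using gpos dpos' by auto
    ultimately have "E_Lam n m Lam psi \<noteq> 0" unfolding E_Lam_def F by auto
    thus ?thesis using rank zr z1 unfolding r_def by auto
  qed
qed



lemma card_size_iff:
  fixes M :: "'a multiset"
  shows "card (set_mset M) = size M \<longleftrightarrow> (\<forall>a \<in># M. count M a = 1)"
proof -
  have sz: "size M = (\<Sum>a\<in>set_mset M. count M a)" by (rule size_multiset_overloaded_eq)
  show ?thesis
  proof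
    assume c: "card (set_mset M) = size M"
    show "\<forall>a \<in># M. count M a = 1"
    proof (rule ccontr)
      assume "\<not> (\<forall>a \<in># M. count M a = 1)"
      then obtain a where a: "a \<in># M" "count M a \<noteq> 1" by auto
      have "count M a \<noteq> 0" using a(1) by (simp add: count_eq_zero_iff)
      hence a2: "2 \<le> count M a" using a(2) by arith
      have "size M = count M a + (\<Sum>b\<in>set_mset M - {a}. count M b)"
        unfolding sz by (rule sum.remove, insert a, auto)
      moreover have "(\<Sum>b\<in>set_mset M - {a}. count M b) \<ge> (\<Sum>b\<in>set_mset M - {a}. 1)"
        by (rule sum_mono, auto)
      moreover have "(\<Sum>b\<in>set_mset M - {a}. (1::nat)) = card (set_mset M) - 1"
        using a by simp
      moreover have "card (set_mset M) \<ge> 1" using a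
        by (metis One_nat_def Suc_leI card_gt_0_iff empty_iff finite_set_mset)
      ultimately show False using c a2 by linarith
    qed
  next
    assume "\<forall>a \<in># M. count M a = 1"
    thus "card (set_mset M) = size M" unfolding sz by simp
  qed
qed

theorem theorem3:
  fixes dA dB :: nat and Lam :: "complex multiset"
  assumes "0 < dA" and "dA \<le> dB"
    and "size Lam = dA" and "\<forall>a \<in># Lam. cmod a = 1"
  shows "(\<forall>psi. unit_state dA dB psi \<longrightarrow>
            (E_Lam dA dB Lam psi = 0 \<longleftrightarrow> schmidt_rank dA dB psi \<le> max_mult Lam))
       \<and> ((\<forall>psi. unit_state dA dB psi \<longrightarrow>
            (E_Lam dA dB Lam psi = 0 \<longleftrightarrow> schmidt_rank dA dB psi = 1))
          \<longleftrightarrow> card (set_mset Lam) = dA)"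
proof -
  note K = key[OF assms]
  have part1: "\<forall>psi. unit_state dA dB psi \<longrightarrow>
            (E_Lam dA dB Lam psi = 0 \<longleftrightarrow> schmidt_rank dA dB psi \<le> max_mult Lam)"
    using K by blast
  define r where "r = max_mult Lam"
  have Lne: "set_mset Lam \<noteq> {}" using assms(1,3) by auto
  have fin: "finite (count Lam ` set_mset Lam)" by auto
  have rin: "r \<in> count Lam ` set_mset Lam" unfolding r_def max_mult_def using fin Lne by (intro Max_in, auto)
  have cnt_le: "count Lam a \<le> r" if "a \<in># Lam" for a
    unfolding r_def max_mult_def using fin that by (intro Max_ge, auto)
  have part2: "(\<forall>psi. unit_state dA dB psi \<longrightarrow>
            (E_Lam dA dB Lam psi = 0 \<longleftrightarrow> schmidt_rank dA dB psi = 1)) \<longleftrightarrow> card (set_mset Lam) = dA"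
  proof
    assume h: "\<forall>psi. unit_state dA dB psi \<longrightarrow> (E_Lam dA dB Lam psi = 0 \<longleftrightarrow> schmidt_rank dA dB psi = 1)"
    show "card (set_mset Lam) = dA"
    proof (rule ccontr)
      assume "card (set_mset Lam) \<noteq> dA"
      hence "\<not> (\<forall>a \<in># Lam. count Lam a = 1)" using card_size_iff[of Lam] assms(3) by auto
      then obtain a where a: "a \<in># Lam" "count Lam a \<noteq> 1" by auto
      have "count Lam a \<noteq> 0" using a(1) by (simp add: count_eq_zero_iff)
      hence a2: "2 \<le> count Lam a" using a(2) by arith
      hence r2: "2 \<le> r" using cnt_le[OF a(1)] by auto
      have "r \<le> dA" using rin count_le_size assms(3) by auto
      hence n2: "2 \<le> dA" and m2: "2 \<le> dB" using r2 assms(2) by auto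
      from example_state[OF n2 m2] obtain psi where u: "unit_state dA dB psi"
        and sr: "schmidt_rank dA dB psi = 2" by auto
      have "E_Lam dA dB Lam psi = 0" using part1 u sr r2 unfolding r_def by auto
      thus False using h u sr by auto
    qed
  next
    assume c: "card (set_mset Lam) = dA"
    hence all1: "\<forall>a \<in># Lam. count Lam a = 1" using card_size_iff[of Lam] assms(3) by auto
    have "r = 1" using rin all1 by auto
    thus "\<forall>psi. unit_state dA dB psi \<longrightarrow> (E_Lam dA dB Lam psi = 0 \<longleftrightarrow> schmidt_rank dA dB psi = 1)"
      using K unfolding r_def by (metis le_antisym)
  qed
  show ?thesis using part1 part2 by blast
qed


end
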